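(* Let $h(x,y)$ be a real analytic function on an open disk $\Omega$ centered at $(0,0)$, not affine-linear, with $h_{xx}h_{yy}-h_{xy}^2\le 0$ on $\Omega$, $h(0,0)=0$ and $\nabla h(0,0)=(0,0)$. Let $\Gamma\subset\Omega$ be a line segment through the origin along which $D^2h$ vanishes identically. Then for every direction $\nu\in\mathbb{S}^1$ transverse to $\Gamma$, the function $h_\nu=\langle\nabla h,\nu\rangle$ does not have $\nabla h_\nu\equiv(0,0)$ on $\Omega$, and (after shrinking $\Omega$ if needed) the line field generated by $\nabla h_\nu$ extends real analytically across $\Gamma\setminus\{(0,0)\}$ in such a way that at every point $p\in\Gamma\setminus\{(0,0)\}$ the extended line is orthogonal to $\Gamma$.
   Context: A line field is a continuous assignment to each point of a line through the origin of the tangent plane; the line field generated by a vector field $V$ assigns to each point $p$ with $V(p)\neq0$ the line spanned by $V(p)$. *)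

theory Defs
  imports "HOL-Analysis.Analysis"
begin

text \<open>Real analyticity of a scalar function of two real variables on a set U:
  near every point of U the function is the sum of an (absolutely, i.e.
  unconditionally) convergent double power series.\<close>
definition real_analytic_on2 :: "(real \<times> real \<Rightarrow> real) \<Rightarrow> (real \<times> real) set \<Rightarrow> bool" where
  "real_analytic_on2 f U \<longleftrightarrow>
     (\<forall>p\<in>U. \<exists>r>0. ball p r \<subseteq> U \<and> (\<exists>a :: nat \<Rightarrow> nat \<Rightarrow> real.
        \<forall>q\<in>ball p r.
          ((\<lambda>(i,j). a i j * (fst q - fst p) ^ i * (snd q - snd p) ^ j) has_sum f q) UNIV))"

definition real_analytic_vf_on :: "(real \<times> real \<Rightarrow> real \<times> real) \<Rightarrow> (real \<times> real) set \<Rightarrow> bool" where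
  "real_analytic_vf_on W U \<longleftrightarrow>
     real_analytic_on2 (\<lambda>q. fst (W q)) U \<and> real_analytic_on2 (\<lambda>q. snd (W q)) U"

definition px :: "(real \<times> real \<Rightarrow> real) \<Rightarrow> real \<times> real \<Rightarrow> real" where
  "px f p = deriv (\<lambda>t. f (t, snd p)) (fst p)"

definition py :: "(real \<times> real \<Rightarrow> real) \<Rightarrow> real \<times> real \<Rightarrow> real" where
  "py f p = deriv (\<lambda>t. f (fst p, t)) (snd p)"

definition grad :: "(real \<times> real \<Rightarrow> real) \<Rightarrow> real \<times> real \<Rightarrow> real \<times> real" where
  "grad f p = (px f p, py f p)"

definition dirderiv :: "(real \<times> real \<Rightarrow> real) \<Rightarrow> real \<times> real \<Rightarrow> real \<times> real \<Rightarrow> real" where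
  "dirderiv f \<nu> p = inner (grad f p) \<nu>"

definition hessian_zero_at :: "(real \<times> real \<Rightarrow> real) \<Rightarrow> real \<times> real \<Rightarrow> bool" where
  "hessian_zero_at f p \<longleftrightarrow>
     px (px f) p = 0 \<and> py (px f) p = 0 \<and> px (py f) p = 0 \<and> py (py f) p = 0"

definition affine_linear_on :: "(real \<times> real \<Rightarrow> real) \<Rightarrow> (real \<times> real) set \<Rightarrow> bool" where
  "affine_linear_on f U \<longleftrightarrow> (\<exists>a b c. \<forall>p\<in>U. f p = a + b * fst p + c * snd p)"

end

theory Submission
  imports Defs
begin


definition trm :: "(nat \<Rightarrow> nat \<Rightarrow> real) \<Rightarrow> real \<times> real \<Rightarrow> nat \<times> nat \<Rightarrow> real" where
  "trm a q = (\<lambda>(i,j). a i j * fst q ^ i * snd q ^ j)"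

definition S :: "(nat \<Rightarrow> nat \<Rightarrow> real) \<Rightarrow> real \<times> real \<Rightarrow> real" where
  "S a q = infsum (trm a q) UNIV"

definition cv :: "(nat \<Rightarrow> nat \<Rightarrow> real) \<Rightarrow> real \<Rightarrow> bool" where
  "cv a \<rho> \<longleftrightarrow> (\<forall>r. 0 < r \<and> r < \<rho> \<longrightarrow> (\<lambda>(i,j). \<bar>a i j\<bar> * r ^ (i+j)) summable_on UNIV)"

definition sqbox :: "real \<Rightarrow> (real \<times> real) set" where
  "sqbox \<rho> = {q. \<bar>fst q\<bar> < \<rho> \<and> \<bar>snd q\<bar> < \<rho>}"

lemma open_sqbox: "open (sqbox \<rho>)"
proof -
  have "sqbox \<rho> = (\<lambda>q. \<bar>fst q\<bar>) -` {..<\<rho>} \<inter> (\<lambda>q. \<bar>snd q\<bar>) -` {..<\<rho>}"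
    by (auto simp: sqbox_def)
  moreover have "open ((\<lambda>q::real\<times>real. \<bar>fst q\<bar>) -` {..<\<rho>})"
    by (intro open_vimage continuous_intros)
  moreover have "open ((\<lambda>q::real\<times>real. \<bar>snd q\<bar>) -` {..<\<rho>})"
    by (intro open_vimage continuous_intros)
  ultimately show ?thesis by auto
qed

lemma ball_sqbox: "ball 0 \<rho> \<subseteq> sqbox \<rho>"
proof
  fix q :: "real \<times> real" assume "q \<in> ball 0 \<rho>"
  then have "norm q < \<rho>" by simp
  moreover have "\<bar>fst q\<bar> \<le> norm q" "\<bar>snd q\<bar> \<le> norm q"
    using norm_fst_le[of "fst q" "snd q"] norm_snd_le[of "snd q" "fst q"] by auto
  ultimately show "q \<in> sqbox \<rho>" by (auto simp: sqbox_def)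
qed

lemma norm_le_abs: "norm (q::real\<times>real) \<le> \<bar>fst q\<bar> + \<bar>snd q\<bar>"
  by (cases q) (simp add: norm_Pair sqrt_sum_squares_le_sum_abs)

lemma sqbox_ball: "sqbox \<rho> \<subseteq> ball 0 (2*\<rho>)"
proof
  fix q :: "real \<times> real" assume "q \<in> sqbox \<rho>"
  then have "\<bar>fst q\<bar> < \<rho>" "\<bar>snd q\<bar> < \<rho>" by (auto simp: sqbox_def)
  moreover have "norm q \<le> \<bar>fst q\<bar> + \<bar>snd q\<bar>"
    by (rule norm_le_abs)
  ultimately show "q \<in> ball 0 (2*\<rho>)" by simp
qed

lemma cv_mono: "cv a \<rho> \<Longrightarrow> \<rho>' \<le> \<rho> \<Longrightarrow> cv a \<rho>'"
  by (auto simp: cv_def)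

lemma cv_summable: "cv a \<rho> \<Longrightarrow> q \<in> sqbox \<rho> \<Longrightarrow> trm a q summable_on UNIV"
proof -
  assume cv: "cv a \<rho>" and q: "q \<in> sqbox \<rho>"
  define r where "r = (max \<bar>fst q\<bar> \<bar>snd q\<bar> + \<rho>) / 2"
  have r: "0 < r" "r < \<rho>" "\<bar>fst q\<bar> \<le> r" "\<bar>snd q\<bar> \<le> r"
    using q by (auto simp: sqbox_def r_def)
  have sm: "(\<lambda>(i,j). \<bar>a i j\<bar> * r ^ (i+j)) summable_on UNIV"
    using cv r by (auto simp: cv_def)
  have "(\<lambda>x. norm (trm a q x)) summable_on UNIV"
  proof (rule summable_on_comparison_test[OF sm])
    fix x :: "nat \<times> nat"
    obtain i j where x: "x = (i,j)" by fastforce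
    have "\<bar>fst q\<bar> ^ i \<le> r ^ i" "\<bar>snd q\<bar> ^ j \<le> r ^ j"
      using r by (auto intro: power_mono)
    then have "\<bar>fst q\<bar> ^ i * \<bar>snd q\<bar> ^ j \<le> r ^ i * r ^ j"
      using r by (intro mult_mono) auto
    then have "\<bar>a i j\<bar> * (\<bar>fst q\<bar> ^ i * \<bar>snd q\<bar> ^ j) \<le> \<bar>a i j\<bar> * (r ^ i * r ^ j)"
      by (intro mult_left_mono) auto
    then show "norm (trm a q x) \<le> (case x of (i, j) \<Rightarrow> \<bar>a i j\<bar> * r ^ (i + j))"
      by (simp add: x trm_def abs_mult power_abs power_add mult.assoc)
    show "0 \<le> norm (trm a q x)" by simp
  qed
  then show ?thesis
    using summable_on_iff_abs_summable_on_real by blast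
qed

lemma S_has_sum: "cv a \<rho> \<Longrightarrow> q \<in> sqbox \<rho> \<Longrightarrow> (trm a q has_sum S a q) UNIV"
  unfolding S_def by (rule has_sum_infsum, rule cv_summable)

lemma S_lin:
  assumes "cv a \<rho>" "cv b \<rho>" "q \<in> sqbox \<rho>"
  shows "S (\<lambda>i j. c1 * a i j + c2 * b i j) q = c1 * S a q + c2 * S b q"
proof -
  have "(trm (\<lambda>i j. c1 * a i j + c2 * b i j) q has_sum (c1 * S a q + c2 * S b q)) UNIV"
  proof -
    have "((\<lambda>x. c1 * trm a q x + c2 * trm b q x) has_sum (c1 * S a q + c2 * S b q)) UNIV"
      by (intro has_sum_add has_sum_cmult_right S_has_sum[OF assms(1,3)] S_has_sum[OF assms(2,3)])
    moreover have "(\<lambda>x. c1 * trm a q x + c2 * trm b q x) = trm (\<lambda>i j. c1 * a i j + c2 * b i j) q"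
      by (auto simp: trm_def algebra_simps)
    ultimately show ?thesis by simp
  qed
  then show ?thesis unfolding S_def by (rule infsumI)
qed

lemma cv_lin:
  assumes "cv a \<rho>" "cv b \<rho>"
  shows "cv (\<lambda>i j. c1 * a i j + c2 * b i j) \<rho>"
  unfolding cv_def
proof (intro allI impI)
  fix r assume r: "0 < r \<and> r < \<rho>"
  have s: "(\<lambda>x. \<bar>c1\<bar> * (case x of (i,j) \<Rightarrow> \<bar>a i j\<bar> * r ^ (i+j)) + \<bar>c2\<bar> * (case x of (i,j) \<Rightarrow> \<bar>b i j\<bar> * r ^ (i+j))) summable_on UNIV"
    using assms r unfolding cv_def
    by (intro summable_on_add summable_on_cmult_right) auto
  show "(\<lambda>(i,j). \<bar>c1 * a i j + c2 * b i j\<bar> * r ^ (i+j)) summable_on UNIV"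
  proof (rule summable_on_comparison_test[OF s])
    fix x :: "nat\<times>nat" obtain i j where x: "x = (i,j)" by fastforce
    have "\<bar>c1 * a i j + c2 * b i j\<bar> \<le> \<bar>c1\<bar> * \<bar>a i j\<bar> + \<bar>c2\<bar> * \<bar>b i j\<bar>"
      by (metis abs_mult abs_triangle_ineq)
    then have "\<bar>c1 * a i j + c2 * b i j\<bar> * r ^ (i+j) \<le> (\<bar>c1\<bar> * \<bar>a i j\<bar> + \<bar>c2\<bar> * \<bar>b i j\<bar>) * r ^ (i+j)"
      using r by (intro mult_right_mono) auto
    then show "(case x of (i,j) \<Rightarrow> \<bar>c1 * a i j + c2 * b i j\<bar> * r ^ (i+j)) \<le> \<bar>c1\<bar> * (case x of (i,j) \<Rightarrow> \<bar>a i j\<bar> * r ^ (i+j)) + \<bar>c2\<bar> * (case x of (i,j) \<Rightarrow> \<bar>b i j\<bar> * r ^ (i+j))"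
      by (simp add: x algebra_simps)
    show "0 \<le> (case x of (i,j) \<Rightarrow> \<bar>c1 * a i j + c2 * b i j\<bar> * r ^ (i+j))"
      using r by (simp add: x)
  qed
qed

lemma S_zero: "S a 0 = a 0 0"
proof -
  have "(trm a 0 has_sum a 0 0) {(0,0)}" by (rule has_sum_finiteI) (auto simp: trm_def)
  then have "(trm a 0 has_sum a 0 0) UNIV"
  proof (subst has_sum_cong_neutral[where T="{(0,0)}" and g="trm a 0"])
    fix x :: "nat \<times> nat" assume "x \<in> UNIV - {(0,0)}"
    then obtain i j where x: "x = (i,j)" "i \<noteq> 0 \<or> j \<noteq> 0" by (cases x) auto
    then show "trm a 0 x = 0" by (auto simp: trm_def zero_prod_def)
  qed auto
  then show ?thesis unfolding S_def by (rule infsumI)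
qed

lemma binom2:
  fixes A B X Y :: "'a::comm_ring_1"
  shows "(\<Sum>(p,q)\<in>{..i}\<times>{..j}. (of_nat (i choose p) * A^p * X^(i-p)) * (of_nat (j choose q) * B^q * Y^(j-q)))
         = (A+X)^i * (B+Y)^j"
proof -
  have "(A+X)^i * (B+Y)^j = (\<Sum>p\<le>i. of_nat (i choose p) * A^p * X^(i-p)) * (\<Sum>q\<le>j. of_nat (j choose q) * B^q * Y^(j-q))"
    by (simp add: binomial_ring)
  also have "\<dots> = (\<Sum>p\<le>i. \<Sum>q\<le>j. (of_nat (i choose p) * A^p * X^(i-p)) * (of_nat (j choose q) * B^q * Y^(j-q)))"
    by (rule sum_product)
  also have "\<dots> = (\<Sum>(p,q)\<in>{..i}\<times>{..j}. (of_nat (i choose p) * A^p * X^(i-p)) * (of_nat (j choose q) * B^q * Y^(j-q)))"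
    by (rule sum.cartesian_product)
  finally show ?thesis by simp
qed

lemma sigma_reindex:
  "(f has_sum x) D \<longleftrightarrow> ((\<lambda>(ij,k). f k) has_sum x) (Sigma UNIV (\<lambda>ij. {k\<in>D. (P k, Q k) = ij}))"
  by (rule has_sum_reindex_bij_witness[where j="\<lambda>k. ((P k, Q k), k)" and i=snd]) auto

lemma group_lemma:
  fixes T :: "'k \<Rightarrow> real" and P Q :: "'k \<Rightarrow> nat"
  assumes sm: "(\<lambda>k. \<bar>T k\<bar> * \<sigma>^(P k + Q k)) summable_on D" and \<sigma>: "0 < \<sigma>"
  defines "b \<equiv> \<lambda>i j. infsum T {k\<in>D. (P k, Q k) = (i,j)}"
  shows "(\<lambda>(i,j). \<bar>b i j\<bar> * \<sigma>^(i+j)) summable_on UNIV"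
    and "\<bar>s\<bar> \<le> \<sigma> \<Longrightarrow> \<bar>t\<bar> \<le> \<sigma> \<Longrightarrow> ((\<lambda>k. T k * s^P k * t^Q k) has_sum S b (s,t)) D"
proof -
  define F where "F = (\<lambda>ij. {k\<in>D. (P k, Q k) = ij})"
  define N where "N = (\<lambda>k. \<bar>T k\<bar> * \<sigma>^(P k + Q k))"
  have FD: "F ij \<subseteq> D" for ij by (auto simp: F_def)
  have NF: "N summable_on F ij" for ij
    using summable_on_subset_banach[OF sm[folded N_def] FD] .
  have TF: "T summable_on F (i,j)" for i j
  proof -
    have "(\<lambda>k. N k * (1 / \<sigma>^(i+j))) summable_on F (i,j)"
      by (intro summable_on_cmult_left NF)
    moreover have "\<And>k. k \<in> F (i,j) \<Longrightarrow> N k * (1 / \<sigma>^(i+j)) = norm (T k)"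
      using \<sigma> by (auto simp: N_def F_def)
    ultimately have "(\<lambda>k. norm (T k)) summable_on F (i,j)"
      by (rule summable_on_cong[THEN iffD1, rotated])
    then show ?thesis using summable_on_iff_abs_summable_on_real by blast
  qed
  have bF: "b i j = infsum T (F (i,j))" for i j by (simp add: b_def F_def)
  have Nsig: "(N has_sum infsum N D) D" using sm[folded N_def] by (rule has_sum_infsum)
  have "((\<lambda>(ij,k). N k) has_sum infsum N D) (Sigma UNIV F)"
    using Nsig sigma_reindex[where f=N and D=D and P=P and Q=Q] by (simp add: F_def)
  then have "((\<lambda>ij. infsum N (F ij)) has_sum infsum N D) UNIV"
    by (rule has_sum_SigmaD) (simp add: NF has_sum_infsum)
  then have s1: "(\<lambda>ij. infsum N (F ij)) summable_on UNIV" by (rule has_sum_imp_summable)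
  show "(\<lambda>(i,j). \<bar>b i j\<bar> * \<sigma>^(i+j)) summable_on UNIV"
  proof (rule summable_on_comparison_test[OF s1])
    fix ij :: "nat \<times> nat"
    obtain i j where ij: "ij = (i,j)" by fastforce
    have ab: "(\<lambda>k. norm (T k)) summable_on F (i,j)" using TF summable_on_iff_abs_summable_on_real by blast
    have "norm (infsum T (F (i,j))) \<le> infsum (\<lambda>k. norm (T k)) (F (i,j))"
      by (rule norm_infsum_bound[OF ab])
    then have "\<bar>b i j\<bar> \<le> infsum (\<lambda>k. norm (T k)) (F (i,j))"
      by (simp add: bF)
    then have "\<bar>b i j\<bar> * \<sigma>^(i+j) \<le> infsum (\<lambda>k. norm (T k)) (F (i,j)) * \<sigma>^(i+j)"
      using \<sigma> by (intro mult_right_mono) auto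
    also have "\<dots> = infsum (\<lambda>k. norm (T k) * \<sigma>^(i+j)) (F (i,j))"
      by (rule infsum_cmult_left'[symmetric])
    also have "\<dots> = infsum N (F (i,j))"
      by (intro infsum_cong) (auto simp: N_def F_def)
    finally show "(case ij of (i,j) \<Rightarrow> \<bar>b i j\<bar> * \<sigma>^(i+j)) \<le> infsum N (F ij)"
      by (simp add: ij)
    show "0 \<le> (case ij of (i,j) \<Rightarrow> \<bar>b i j\<bar> * \<sigma>^(i+j))"
      using \<sigma> by (simp add: ij)
  qed
  assume st: "\<bar>s\<bar> \<le> \<sigma>" "\<bar>t\<bar> \<le> \<sigma>"
  define E where "E = (\<lambda>k. T k * s^P k * t^Q k)"
  have "(\<lambda>k. norm (E k)) summable_on D"
  proof (rule summable_on_comparison_test[OF sm])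
    fix k assume "k \<in> D"
    have "\<bar>s\<bar>^P k \<le> \<sigma>^P k" "\<bar>t\<bar>^Q k \<le> \<sigma>^Q k"
      using st by (auto intro: power_mono)
    then have "\<bar>s\<bar>^P k * \<bar>t\<bar>^Q k \<le> \<sigma>^P k * \<sigma>^Q k"
      using \<sigma> by (intro mult_mono) auto
    then have "\<bar>T k\<bar> * (\<bar>s\<bar>^P k * \<bar>t\<bar>^Q k) \<le> \<bar>T k\<bar> * (\<sigma>^P k * \<sigma>^Q k)"
      by (intro mult_left_mono) auto
    then show "norm (E k) \<le> \<bar>T k\<bar> * \<sigma>^(P k + Q k)"
      by (simp add: E_def abs_mult power_abs power_add mult.assoc)
  qed auto
  then have Es: "E summable_on D" using summable_on_iff_abs_summable_on_real by blast
  have sig: "((\<lambda>(ij,k). E k) has_sum infsum E D) (Sigma UNIV F)"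
    using has_sum_infsum[OF Es] sigma_reindex[where f=E and D=D and P=P and Q=Q] by (simp add: F_def)
  have inner: "((\<lambda>k. E k) has_sum (trm b (s,t) ij)) (F ij)" for ij
  proof -
    obtain i j where ij: "ij = (i,j)" by fastforce
    have "((\<lambda>k. T k * (s^i * t^j)) has_sum (b i j * (s^i * t^j))) (F (i,j))"
      unfolding bF by (intro has_sum_cmult_left has_sum_infsum TF)
    then have "(E has_sum (b i j * (s^i * t^j))) (F (i,j))"
      by (rule has_sum_cong[THEN iffD1, rotated]) (auto simp: E_def F_def mult.assoc)
    then show ?thesis by (simp add: ij trm_def mult.assoc)
  qed
  have "(trm b (s,t) has_sum infsum E D) UNIV"
    by (rule has_sum_SigmaD[OF sig]) (simp add: inner)
  then have "S b (s,t) = infsum E D" unfolding S_def by (rule infsumI)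
  then show "((\<lambda>k. T k * s^P k * t^Q k) has_sum S b (s,t)) D"
    using has_sum_infsum[OF Es] by (simp add: E_def)
qed



definition Dx :: "(nat \<Rightarrow> nat \<Rightarrow> real) \<Rightarrow> nat \<Rightarrow> nat \<Rightarrow> real" where
  "Dx a = (\<lambda>i j. of_nat (i+1) * a (i+1) j)"
definition Dy :: "(nat \<Rightarrow> nat \<Rightarrow> real) \<Rightarrow> nat \<Rightarrow> nat \<Rightarrow> real" where
  "Dy a = (\<lambda>i j. of_nat (j+1) * a i (j+1))"

lemma cv_bound:
  assumes "cv a \<rho>" "0 < r" "r < \<rho>" "\<And>i j. 0 \<le> g (i,j) \<and> g (i,j) \<le> \<bar>a i j\<bar> * r^(i+j)"
  shows "g summable_on UNIV"
proof -
  have "(\<lambda>(i,j). \<bar>a i j\<bar> * r ^ (i+j)) summable_on UNIV" using assms by (auto simp: cv_def)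
  then show ?thesis
    by (rule summable_on_comparison_test) (use assms(4) in auto)
qed

lemma shift_lemma:
  assumes cv: "cv a \<rho>" and x0: "\<bar>x0\<bar> < \<rho>" and y0: "\<bar>y0\<bar> < \<rho>"
  defines "\<sigma> \<equiv> \<rho> - max \<bar>x0\<bar> \<bar>y0\<bar>"
  shows "\<exists>b. cv b \<sigma> \<and> (\<forall>q\<in>sqbox \<sigma>. S a (x0 + fst q, y0 + snd q) = S b q)
           \<and> b 1 0 = S (Dx a) (x0,y0) \<and> b 0 1 = S (Dy a) (x0,y0)"
proof -
  define D :: "((nat\<times>nat)\<times>(nat\<times>nat)) set" where "D = Sigma UNIV (\<lambda>(i,j). {..i}\<times>{..j})"
  define T :: "(nat\<times>nat)\<times>(nat\<times>nat) \<Rightarrow> real" where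
    "T = (\<lambda>((i,j),(p,q)). a i j * (of_nat (i choose p) * x0^(i-p)) * (of_nat (j choose q) * y0^(j-q)))"
  define P :: "(nat\<times>nat)\<times>(nat\<times>nat) \<Rightarrow> nat" where "P = (\<lambda>((i,j),(p,q)). p)"
  define Q :: "(nat\<times>nat)\<times>(nat\<times>nat) \<Rightarrow> nat" where "Q = (\<lambda>((i,j),(p,q)). q)"
  define b where "b = (\<lambda>i j. infsum T {k\<in>D. (P k, Q k) = (i,j)})"
  have key: "(\<lambda>k. \<bar>T k\<bar> * r^(P k + Q k)) summable_on D" if r: "0 < r" "r < \<sigma>" for r
  proof -
    define g where "g = (\<lambda>(i,j). \<bar>a i j\<bar> * (r + \<bar>x0\<bar>)^i * (r + \<bar>y0\<bar>)^j)"
    have fin: "((\<lambda>pq. \<bar>T ((i,j),pq)\<bar> * r^(P ((i,j),pq) + Q ((i,j),pq))) has_sum g (i,j)) ({..i}\<times>{..j})" for i j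
    proof (rule has_sum_finiteI)
      have "(\<Sum>pq\<in>{..i}\<times>{..j}. \<bar>T ((i,j),pq)\<bar> * r^(P ((i,j),pq) + Q ((i,j),pq)))
          = \<bar>a i j\<bar> * (\<Sum>(p,q)\<in>{..i}\<times>{..j}. (of_nat (i choose p) * r^p * \<bar>x0\<bar>^(i-p)) * (of_nat (j choose q) * r^q * \<bar>y0\<bar>^(j-q)))"
        unfolding sum_distrib_left
        by (intro sum.cong refl) (clarsimp simp: T_def P_def Q_def abs_mult power_abs power_add mult_ac)
      also have "\<dots> = g (i,j)" by (simp add: binom2 g_def)
      finally show "g (i,j) = (\<Sum>pq\<in>{..i}\<times>{..j}. \<bar>T ((i,j),pq)\<bar> * r^(P ((i,j),pq) + Q ((i,j),pq)))" by simp
    qed simp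
    have gs: "g summable_on UNIV"
    proof (rule cv_bound[OF cv, of "r + max \<bar>x0\<bar> \<bar>y0\<bar>"])
      show "0 < r + max \<bar>x0\<bar> \<bar>y0\<bar>" using r by simp
      show "r + max \<bar>x0\<bar> \<bar>y0\<bar> < \<rho>" using r by (simp add: \<sigma>_def)
      fix i j
      have "(r + \<bar>x0\<bar>)^i \<le> (r + max \<bar>x0\<bar> \<bar>y0\<bar>)^i" "(r + \<bar>y0\<bar>)^j \<le> (r + max \<bar>x0\<bar> \<bar>y0\<bar>)^j"
        using r by (auto intro!: power_mono)
      then have "(r + \<bar>x0\<bar>)^i * (r + \<bar>y0\<bar>)^j \<le> (r + max \<bar>x0\<bar> \<bar>y0\<bar>)^i * (r + max \<bar>x0\<bar> \<bar>y0\<bar>)^j"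
        using r by (intro mult_mono) (auto intro!: zero_le_power add_nonneg_nonneg simp: le_max_iff_disj)
      then have "\<bar>a i j\<bar> * ((r + \<bar>x0\<bar>)^i * (r + \<bar>y0\<bar>)^j) \<le> \<bar>a i j\<bar> * ((r + max \<bar>x0\<bar> \<bar>y0\<bar>)^i * (r + max \<bar>x0\<bar> \<bar>y0\<bar>)^j)"
        by (intro mult_left_mono) auto
      then show "0 \<le> g (i,j) \<and> g (i,j) \<le> \<bar>a i j\<bar> * (r + max \<bar>x0\<bar> \<bar>y0\<bar>)^(i+j)"
        using r by (simp add: g_def power_add mult.assoc)
    qed
    show ?thesis unfolding D_def
      by (rule summable_on_SigmaI[where g=g]) (use fin gs r in auto)
  qed
  have cvb: "cv b \<sigma>"
    unfolding cv_def b_def using group_lemma(1)[OF key] by auto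
  have eq: "S a (x0 + fst q, y0 + snd q) = S b q" if q: "q \<in> sqbox \<sigma>" for q
  proof -
    obtain s t where qst: "q = (s,t)" by fastforce
    define r where "r = (max \<bar>s\<bar> \<bar>t\<bar> + \<sigma>) / 2"
    have r: "0 < r" "r < \<sigma>" "\<bar>s\<bar> \<le> r" "\<bar>t\<bar> \<le> r"
      using q by (auto simp: sqbox_def r_def qst)
    have hs: "((\<lambda>k. T k * s^P k * t^Q k) has_sum S b (s,t)) D"
      unfolding b_def by (rule group_lemma(2)[OF key[OF r(1,2)] r(1,3,4)])
    have fin: "((\<lambda>pq. T ((i,j),pq) * s^P ((i,j),pq) * t^Q ((i,j),pq)) has_sum trm a (x0+s, y0+t) (i,j)) ({..i}\<times>{..j})" for i j
    proof (rule has_sum_finiteI)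
      have "(\<Sum>pq\<in>{..i}\<times>{..j}. T ((i,j),pq) * s^P ((i,j),pq) * t^Q ((i,j),pq))
          = a i j * (\<Sum>(p,q)\<in>{..i}\<times>{..j}. (of_nat (i choose p) * s^p * x0^(i-p)) * (of_nat (j choose q) * t^q * y0^(j-q)))"
        unfolding sum_distrib_left
        by (intro sum.cong refl) (clarsimp simp: T_def P_def Q_def mult_ac)
      also have "\<dots> = trm a (x0+s, y0+t) (i,j)" unfolding binom2 by (simp add: trm_def add.commute)
      finally show "trm a (x0+s, y0+t) (i,j) = (\<Sum>pq\<in>{..i}\<times>{..j}. T ((i,j),pq) * s^P ((i,j),pq) * t^Q ((i,j),pq))" by simp
    qed simp
    have "(trm a (x0+s, y0+t) has_sum S b (s,t)) UNIV"
      by (rule has_sum_SigmaD[OF hs[unfolded D_def]]) (use fin in auto)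
    then show ?thesis unfolding S_def qst by (simp add: infsumI)
  qed
  have b10: "b 1 0 = S (Dx a) (x0,y0)"
    unfolding b_def S_def
    by (rule infsum_reindex_bij_witness[where j="\<lambda>((i,j),_). (i - 1, j)" and i="\<lambda>(i,j). ((i+1,j),(1,0))"])
       (auto simp: D_def P_def Q_def T_def Dx_def trm_def)
  have b01: "b 0 1 = S (Dy a) (x0,y0)"
    unfolding b_def S_def
    by (rule infsum_reindex_bij_witness[where j="\<lambda>((i,j),_). (i, j - 1)" and i="\<lambda>(i,j). ((i,j+1),(0,1))"])
       (auto simp: D_def P_def Q_def T_def Dy_def trm_def)
  show ?thesis using cvb eq b10 b01 by blast
qed

lemma pw_split: "p \<le> i \<Longrightarrow> q \<le> j \<Longrightarrow> (x::'a::comm_monoid_mult)^(i + j - (p + q)) = x^(i-p) * x^(j-q)"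
proof -
  assume "p \<le> i" "q \<le> j"
  then have "i + j - (p+q) = (i-p)+(j-q)" by arith
  then show ?thesis by (simp add: power_add)
qed

lemma lin_lemma:
  assumes cv: "cv a \<rho>" and \<kappa>: "0 < \<kappa>" "\<bar>\<alpha>\<bar> + \<bar>\<beta>\<bar> \<le> \<kappa>" "\<bar>\<gamma>\<bar> + \<bar>\<delta>\<bar> \<le> \<kappa>"
  shows "\<exists>b. cv b (\<rho>/\<kappa>) \<and> (\<forall>q\<in>sqbox (\<rho>/\<kappa>). S a (\<alpha> * fst q + \<beta> * snd q, \<gamma> * fst q + \<delta> * snd q) = S b q)"
proof -
  define D :: "((nat\<times>nat)\<times>(nat\<times>nat)) set" where "D = Sigma UNIV (\<lambda>(i,j). {..i}\<times>{..j})"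
  define T :: "(nat\<times>nat)\<times>(nat\<times>nat) \<Rightarrow> real" where
    "T = (\<lambda>((i,j),(p,q)). a i j * (of_nat (i choose p) * \<alpha>^p * \<beta>^(i-p)) * (of_nat (j choose q) * \<gamma>^q * \<delta>^(j-q)))"
  define P :: "(nat\<times>nat)\<times>(nat\<times>nat) \<Rightarrow> nat" where "P = (\<lambda>((i,j),(p,q)). p + q)"
  define Q :: "(nat\<times>nat)\<times>(nat\<times>nat) \<Rightarrow> nat" where "Q = (\<lambda>((i,j),(p,q)). (i - p) + (j - q))"
  define b where "b = (\<lambda>i j. infsum T {k\<in>D. (P k, Q k) = (i,j)})"
  have key: "(\<lambda>k. \<bar>T k\<bar> * r^(P k + Q k)) summable_on D" if r: "0 < r" "r < \<rho>/\<kappa>" for r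
  proof -
    define g where "g = (\<lambda>(i,j). \<bar>a i j\<bar> * (\<bar>\<alpha>\<bar> * r + \<bar>\<beta>\<bar> * r)^i * (\<bar>\<gamma>\<bar> * r + \<bar>\<delta>\<bar> * r)^j)"
    have fin: "((\<lambda>pq. \<bar>T ((i,j),pq)\<bar> * r^(P ((i,j),pq) + Q ((i,j),pq))) has_sum g (i,j)) ({..i}\<times>{..j})" for i j
    proof (rule has_sum_finiteI)
      have "(\<Sum>pq\<in>{..i}\<times>{..j}. \<bar>T ((i,j),pq)\<bar> * r^(P ((i,j),pq) + Q ((i,j),pq)))
          = \<bar>a i j\<bar> * (\<Sum>(p,q)\<in>{..i}\<times>{..j}. (of_nat (i choose p) * (\<bar>\<alpha>\<bar> * r)^p * (\<bar>\<beta>\<bar> * r)^(i-p)) * (of_nat (j choose q) * (\<bar>\<gamma>\<bar> * r)^q * (\<bar>\<delta>\<bar> * r)^(j-q)))"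
        unfolding sum_distrib_left
        by (intro sum.cong refl) (clarsimp simp: T_def P_def Q_def abs_mult power_abs power_add power_mult_distrib mult_ac pw_split)
      also have "\<dots> = g (i,j)" unfolding binom2 by (simp add: g_def)
      finally show "g (i,j) = (\<Sum>pq\<in>{..i}\<times>{..j}. \<bar>T ((i,j),pq)\<bar> * r^(P ((i,j),pq) + Q ((i,j),pq)))" by simp
    qed simp
    have gs: "g summable_on UNIV"
    proof (rule cv_bound[OF cv, of "\<kappa> * r"])
      show "0 < \<kappa> * r" using r \<kappa> by simp
      show "\<kappa> * r < \<rho>" using r \<kappa> by (simp add: pos_less_divide_eq mult.commute)
      fix i j
      have "\<bar>\<alpha>\<bar> * r + \<bar>\<beta>\<bar> * r \<le> \<kappa> * r" "\<bar>\<gamma>\<bar> * r + \<bar>\<delta>\<bar> * r \<le> \<kappa> * r"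
        using r \<kappa> by (simp_all add: distrib_right[symmetric] mult_right_mono)
      then have "(\<bar>\<alpha>\<bar> * r + \<bar>\<beta>\<bar> * r)^i \<le> (\<kappa> * r)^i" "(\<bar>\<gamma>\<bar> * r + \<bar>\<delta>\<bar> * r)^j \<le> (\<kappa> * r)^j"
        using r by (auto intro!: power_mono)
      then have "(\<bar>\<alpha>\<bar> * r + \<bar>\<beta>\<bar> * r)^i * (\<bar>\<gamma>\<bar> * r + \<bar>\<delta>\<bar> * r)^j \<le> (\<kappa> * r)^i * (\<kappa> * r)^j"
        using r \<kappa> by (intro mult_mono) (auto intro!: zero_le_power)
      then have "\<bar>a i j\<bar> * ((\<bar>\<alpha>\<bar> * r + \<bar>\<beta>\<bar> * r)^i * (\<bar>\<gamma>\<bar> * r + \<bar>\<delta>\<bar> * r)^j) \<le> \<bar>a i j\<bar> * ((\<kappa> * r)^i * (\<kappa> * r)^j)"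
        by (intro mult_left_mono) auto
      then show "0 \<le> g (i,j) \<and> g (i,j) \<le> \<bar>a i j\<bar> * (\<kappa> * r)^(i+j)"
        using r by (simp add: g_def power_add mult.assoc)
    qed
    show ?thesis unfolding D_def
      by (rule summable_on_SigmaI[where g=g]) (use fin gs r in auto)
  qed
  have cvb: "cv b (\<rho>/\<kappa>)"
    unfolding cv_def b_def using group_lemma(1)[OF key] by auto
  have eq: "S a (\<alpha> * fst q + \<beta> * snd q, \<gamma> * fst q + \<delta> * snd q) = S b q" if q: "q \<in> sqbox (\<rho>/\<kappa>)" for q
  proof -
    obtain s t where qst: "q = (s,t)" by fastforce
    define R where "R = \<rho> / \<kappa>"
    have qq: "\<bar>s\<bar> < R" "\<bar>t\<bar> < R" using q by (auto simp: sqbox_def qst R_def)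
    define r where "r = (max \<bar>s\<bar> \<bar>t\<bar> + R) / 2"
    have r0: "0 < r" "r < R" "\<bar>s\<bar> \<le> r" "\<bar>t\<bar> \<le> r"
      using qq by (auto simp: r_def max_def)
    then have r: "0 < r" "r < \<rho> / \<kappa>" "\<bar>s\<bar> \<le> r" "\<bar>t\<bar> \<le> r" by (auto simp: R_def)
    have hs: "((\<lambda>k. T k * s^P k * t^Q k) has_sum S b (s,t)) D"
      unfolding b_def by (rule group_lemma(2)[OF key[OF r(1,2)] r(1,3,4)])
    have fin: "((\<lambda>pq. T ((i,j),pq) * s^P ((i,j),pq) * t^Q ((i,j),pq)) has_sum trm a (\<alpha> * s + \<beta> * t, \<gamma> * s + \<delta> * t) (i,j)) ({..i}\<times>{..j})" for i j
    proof (rule has_sum_finiteI)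
      have "(\<Sum>pq\<in>{..i}\<times>{..j}. T ((i,j),pq) * s^P ((i,j),pq) * t^Q ((i,j),pq))
          = a i j * (\<Sum>(p,q)\<in>{..i}\<times>{..j}. (of_nat (i choose p) * (\<alpha> * s)^p * (\<beta> * t)^(i-p)) * (of_nat (j choose q) * (\<gamma> * s)^q * (\<delta> * t)^(j-q)))"
        unfolding sum_distrib_left
        by (intro sum.cong refl) (clarsimp simp: T_def P_def Q_def power_add power_mult_distrib mult_ac pw_split)
      also have "\<dots> = trm a (\<alpha> * s + \<beta> * t, \<gamma> * s + \<delta> * t) (i,j)" unfolding binom2 by (simp add: trm_def)
      finally show "trm a (\<alpha> * s + \<beta> * t, \<gamma> * s + \<delta> * t) (i,j) = (\<Sum>pq\<in>{..i}\<times>{..j}. T ((i,j),pq) * s^P ((i,j),pq) * t^Q ((i,j),pq))" by simp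
    qed simp
    have "(trm a (\<alpha> * s + \<beta> * t, \<gamma> * s + \<delta> * t) has_sum S b (s,t)) UNIV"
      by (rule has_sum_SigmaD[OF hs[unfolded D_def]]) (use fin in auto)
    then show ?thesis unfolding S_def qst by (simp add: infsumI)
  qed
  show ?thesis using cvb eq by blast
qed



lemma bounded_nq:
  assumes "0 \<le> q" "q < (1::real)"
  shows "\<exists>B. \<forall>n. of_nat (n+1) * q^n \<le> B"
proof -
  have "(\<lambda>n. of_nat n * q ^ n) \<longlonglongrightarrow> 0"
    using assms by (intro powser_times_n_limit_0) auto
  then have "Bseq (\<lambda>n. of_nat n * q ^ n)" by (rule convergent_imp_Bseq[OF convergentI])
  then obtain K where K: "\<forall>n. norm (of_nat n * q ^ n) \<le> K" using BseqE by blast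
  have "of_nat (n+1) * q^n \<le> K + 1" for n
  proof -
    have "of_nat n * q ^ n \<le> K" using K abs_ge_self[of "of_nat n * q ^ n"] by (metis order_trans real_norm_def)
    moreover have "q^n \<le> 1" using assms by (simp add: power_le_one)
    ultimately show ?thesis by (simp add: distrib_right)
  qed
  then show ?thesis by blast
qed

lemma cv_Dx: assumes "cv a \<rho>" shows "cv (Dx a) \<rho>"
  unfolding cv_def
proof (intro allI impI)
  fix r assume r: "0 < r \<and> r < \<rho>"
  define r' where "r' = (r + \<rho>)/2"
  have r': "0 < r'" "r < r'" "r' < \<rho>" using r by (auto simp: r'_def)
  obtain B where B: "\<And>n. of_nat (n+1) * (r/r')^n \<le> B"
    using bounded_nq[of "r/r'"] r r' by auto
  have s0: "(\<lambda>(i,j). \<bar>a i j\<bar> * r' ^ (i+j)) summable_on UNIV" using assms r' by (auto simp: cv_def)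
  have "(\<lambda>(i,j). \<bar>a i j\<bar> * r' ^ (i+j)) summable_on ((\<lambda>(i,j). (i+1,j)) ` UNIV)"
    by (rule summable_on_subset_banach[OF s0]) auto
  then have "((\<lambda>(i,j). \<bar>a i j\<bar> * r' ^ (i+j)) \<circ> (\<lambda>(i,j). (i+1,j))) summable_on UNIV"
    by (subst summable_on_reindex[symmetric]) (auto simp: inj_on_def)
  then have s1: "(\<lambda>x. (B / r') * ((\<lambda>(i,j). \<bar>a i j\<bar> * r' ^ (i+j)) \<circ> (\<lambda>(i,j). (i+1,j))) x) summable_on UNIV"
    by (rule summable_on_cmult_right)
  show "(\<lambda>(i,j). \<bar>Dx a i j\<bar> * r ^ (i+j)) summable_on UNIV"
  proof (rule summable_on_comparison_test[OF s1])
    fix x :: "nat \<times> nat" obtain i j where x: "x = (i,j)" by fastforce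
    have "of_nat (i+1) * r^i = of_nat (i+1) * (r/r')^i * r'^i"
      using r' by (simp add: power_divide)
    also have "\<dots> \<le> B * r'^i" using B[of i] r' by (intro mult_right_mono) auto
    finally have 1: "of_nat (i+1) * r^i \<le> B * r'^i" .
    have rj: "r^j \<le> r'^j" using r r' by (intro power_mono) auto
    have B0: "0 \<le> B" using B[of 0] by simp
    have "(of_nat (i+1) * r^i) * r^j \<le> (B * r'^i) * r'^j"
      by (rule mult_mono[OF 1 rj]) (use B0 r r' in auto)
    then have "\<bar>a (i+1) j\<bar> * ((of_nat (i+1) * r^i) * r^j) \<le> \<bar>a (i+1) j\<bar> * ((B * r'^i) * r'^j)"
      by (intro mult_left_mono) auto
    moreover have "(B / r') * (\<bar>a (i+1) j\<bar> * r'^(i+1+j)) = \<bar>a (i+1) j\<bar> * ((B * r'^i) * r'^j)"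
      using r' by (simp add: power_add field_simps)
    ultimately show "(case x of (i,j) \<Rightarrow> \<bar>Dx a i j\<bar> * r ^ (i+j)) \<le> (B / r') * ((\<lambda>(i,j). \<bar>a i j\<bar> * r' ^ (i+j)) \<circ> (\<lambda>(i,j). (i+1,j))) x"
      by (simp add: x Dx_def abs_mult power_add mult_ac)
    show "0 \<le> (case x of (i,j) \<Rightarrow> \<bar>Dx a i j\<bar> * r ^ (i+j))" using r by (simp add: x)
  qed
qed

lemma cv_Dy: assumes "cv a \<rho>" shows "cv (Dy a) \<rho>"
  unfolding cv_def
proof (intro allI impI)
  fix r assume r: "0 < r \<and> r < \<rho>"
  define r' where "r' = (r + \<rho>)/2"
  have r': "0 < r'" "r < r'" "r' < \<rho>" using r by (auto simp: r'_def)
  obtain B where B: "\<And>n. of_nat (n+1) * (r/r')^n \<le> B"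
    using bounded_nq[of "r/r'"] r r' by auto
  have s0: "(\<lambda>(i,j). \<bar>a i j\<bar> * r' ^ (i+j)) summable_on UNIV" using assms r' by (auto simp: cv_def)
  have "(\<lambda>(i,j). \<bar>a i j\<bar> * r' ^ (i+j)) summable_on ((\<lambda>(i,j). (i,j+1)) ` UNIV)"
    by (rule summable_on_subset_banach[OF s0]) auto
  then have "((\<lambda>(i,j). \<bar>a i j\<bar> * r' ^ (i+j)) \<circ> (\<lambda>(i,j). (i,j+1))) summable_on UNIV"
    by (subst summable_on_reindex[symmetric]) (auto simp: inj_on_def)
  then have s1: "(\<lambda>x. (B / r') * ((\<lambda>(i,j). \<bar>a i j\<bar> * r' ^ (i+j)) \<circ> (\<lambda>(i,j). (i,j+1))) x) summable_on UNIV"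
    by (rule summable_on_cmult_right)
  show "(\<lambda>(i,j). \<bar>Dy a i j\<bar> * r ^ (i+j)) summable_on UNIV"
  proof (rule summable_on_comparison_test[OF s1])
    fix x :: "nat \<times> nat" obtain i j where x: "x = (i,j)" by fastforce
    have "of_nat (j+1) * r^j = of_nat (j+1) * (r/r')^j * r'^j"
      using r' by (simp add: power_divide)
    also have "\<dots> \<le> B * r'^j" using B[of j] r' by (intro mult_right_mono) auto
    finally have 1: "of_nat (j+1) * r^j \<le> B * r'^j" .
    have rj: "r^i \<le> r'^i" using r r' by (intro power_mono) auto
    have B0: "0 \<le> B" using B[of 0] by simp
    have "(of_nat (j+1) * r^j) * r^i \<le> (B * r'^j) * r'^i"
      by (rule mult_mono[OF 1 rj]) (use B0 r r' in auto)
    then have "\<bar>a i (j+1)\<bar> * ((of_nat (j+1) * r^j) * r^i) \<le> \<bar>a i (j+1)\<bar> * ((B * r'^j) * r'^i)"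
      by (intro mult_left_mono) auto
    moreover have "(B / r') * (\<bar>a i (j+1)\<bar> * r'^(i+(j+1))) = \<bar>a i (j+1)\<bar> * ((B * r'^j) * r'^i)"
      using r' by (simp add: power_add field_simps)
    ultimately show "(case x of (i,j) \<Rightarrow> \<bar>Dy a i j\<bar> * r ^ (i+j)) \<le> (B / r') * ((\<lambda>(i,j). \<bar>a i j\<bar> * r' ^ (i+j)) \<circ> (\<lambda>(i,j). (i,j+1))) x"
      by (simp add: x Dy_def abs_mult power_add mult_ac)
    show "0 \<le> (case x of (i,j) \<Rightarrow> \<bar>Dy a i j\<bar> * r ^ (i+j))" using r by (simp add: x)
  qed
qed



lemma pow_bound:
  assumes "0 \<le> (m::real)" "m \<le> r0" "0 < r0" "2 \<le> n"
  shows "m^n \<le> (m/r0)^2 * r0^n"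
proof -
  obtain k where k: "n = 2 + k" using le_Suc_ex[OF assms(4)] by blast
  have "m^n = m^2 * m^k" by (simp add: k power_add power2_eq_square algebra_simps)
  also have "\<dots> \<le> m^2 * r0^k" using assms by (intro mult_left_mono power_mono) auto
  also have "\<dots> = (m/r0)^2 * r0^n" using assms
    by (simp add: k power_divide power_add field_simps power2_eq_square)
  finally show ?thesis .
qed

lemma frechet0:
  assumes cv: "cv b \<sigma>" and \<sigma>: "0 < \<sigma>"
  shows "(S b has_derivative (\<lambda>v. b 1 0 * fst v + b 0 1 * snd v)) (at 0)"
  unfolding has_derivative_at_alt
proof (intro conjI allI impI)
  show "bounded_linear (\<lambda>v::real\<times>real. b 1 0 * fst v + b 0 1 * snd v)"
    by (intro bounded_linear_add bounded_linear_compose[OF bounded_linear_mult_right] bounded_linear_fst bounded_linear_snd)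
  fix e :: real assume e: "0 < e"
  define r0 where "r0 = \<sigma>/2"
  have r0: "0 < r0" "r0 < \<sigma>" using \<sigma> by (auto simp: r0_def)
  define G where "G = (\<lambda>(i,j). \<bar>b i j\<bar> * r0^(i+j))"
  define F :: "(nat\<times>nat) set" where "F = {(0,0),(1,0),(0,1)}"
  have sm: "G summable_on UNIV" using cv r0 by (auto simp: cv_def G_def)
  define M where "M = infsum G UNIV"
  have G0: "G x \<ge> 0" for x using r0 by (auto simp: G_def split: prod.splits)
  have M0: "0 \<le> M" unfolding M_def by (rule infsum_nonneg) (use G0 in auto)
  define d where "d = min r0 (e * r0^2 / (M+1))"
  have d: "0 < d" using r0 e M0 by (auto simp: d_def)
  show "\<exists>d>0. \<forall>y. norm (y - 0) < d \<longrightarrow> norm (S b y - S b 0 - (b 1 0 * fst (y - 0) + b 0 1 * snd (y - 0))) \<le> e * norm (y - 0)"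
  proof (intro exI[of _ d] conjI allI impI d)
    fix y :: "real \<times> real" assume yd: "norm (y - 0) < d"
    obtain u w where y: "y = (u,w)" by fastforce
    define m where "m = max \<bar>u\<bar> \<bar>w\<bar>"
    have um: "\<bar>u\<bar> \<le> norm y" "\<bar>w\<bar> \<le> norm y"
      using norm_fst_le[of u w] norm_snd_le[of w u] by (auto simp: y)
    then have mn: "m \<le> norm y" "0 \<le> m" by (auto simp: m_def)
    have md: "m < d" using mn yd by simp
    have mr: "m \<le> r0" using md by (simp add: d_def)
    have ybox: "y \<in> sqbox \<sigma>" using mr r0 by (auto simp: sqbox_def y m_def)
    have h1: "(trm b y has_sum S b y) UNIV" by (rule S_has_sum[OF cv ybox])
    have h2: "(trm b y has_sum (b 0 0 + b 1 0 * u + b 0 1 * w)) F"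
      by (rule has_sum_finiteI) (auto simp: F_def trm_def y)
    have h3: "(trm b y has_sum (S b y - (b 0 0 + b 1 0 * u + b 0 1 * w))) (UNIV - F)"
      by (rule has_sum_Diff[OF h1 h2]) simp
    have bnd: "norm (trm b y x) \<le> (m/r0)^2 * G x" if x: "x \<in> UNIV - F" for x
    proof -
      obtain i j where ij: "x = (i,j)" by fastforce
      have n2: "2 \<le> i + j" using x by (auto simp: ij F_def)
      have "\<bar>u\<bar>^i \<le> m^i" "\<bar>w\<bar>^j \<le> m^j" by (auto intro!: power_mono simp: m_def)
      then have "\<bar>u\<bar>^i * \<bar>w\<bar>^j \<le> m^i * m^j" using mn(2) by (intro mult_mono) (auto intro!: zero_le_power)
      also have "\<dots> = m^(i+j)" by (simp add: power_add)
      also have "\<dots> \<le> (m/r0)^2 * r0^(i+j)" by (rule pow_bound[OF mn(2) mr r0(1) n2])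
      finally have "\<bar>b i j\<bar> * (\<bar>u\<bar>^i * \<bar>w\<bar>^j) \<le> \<bar>b i j\<bar> * ((m/r0)^2 * r0^(i+j))"
        by (intro mult_left_mono) auto
      then show ?thesis by (simp add: ij y trm_def G_def abs_mult power_abs mult_ac)
    qed
    have smF: "G summable_on (UNIV - F)" by (rule summable_on_subset_banach[OF sm]) auto
    have smF': "(\<lambda>x. (m/r0)^2 * G x) summable_on (UNIV - F)" by (rule summable_on_cmult_right[OF smF])
    have nsm: "(\<lambda>x. norm (trm b y x)) summable_on (UNIV - F)"
      by (rule summable_on_comparison_test[OF smF']) (use bnd in auto)
    have "norm (S b y - (b 0 0 + b 1 0 * u + b 0 1 * w)) \<le> infsum (\<lambda>x. norm (trm b y x)) (UNIV - F)"
      by (rule norm_has_sum_bound[OF has_sum_infsum[OF nsm] h3])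
    also have "\<dots> \<le> infsum (\<lambda>x. (m/r0)^2 * G x) (UNIV - F)"
      by (rule infsum_mono[OF nsm smF']) (use bnd in auto)
    also have "\<dots> = (m/r0)^2 * infsum G (UNIV - F)" by (rule infsum_cmult_right')
    also have "\<dots> \<le> (m/r0)^2 * M"
    proof (intro mult_left_mono)
      show "infsum G (UNIV - F) \<le> M" unfolding M_def
        by (rule infsum_mono_neutral[OF smF sm]) (use G0 in auto)
    qed auto
    also have "\<dots> \<le> e * m"
    proof -
      have "m * M \<le> (e * r0^2 / (M+1)) * M" using md M0 by (intro mult_right_mono) (auto simp: d_def)
      also have "\<dots> \<le> e * r0^2" using M0 e r0 by (simp add: field_simps)
      finally have "m * M \<le> e * r0^2" .
      then have "m * (m * M) \<le> m * (e * r0^2)" using mn by (intro mult_left_mono) auto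
      then show ?thesis using r0 by (simp add: power_divide field_simps power2_eq_square)
    qed
    also have "\<dots> \<le> e * norm y" using mn e by simp
    finally show "norm (S b y - S b 0 - (b 1 0 * fst (y - 0) + b 0 1 * snd (y - 0))) \<le> e * norm (y - 0)"
      by (simp add: S_zero y algebra_simps)
  qed
qed

lemma S_deriv:
  assumes cv: "cv a \<rho>" and q: "q \<in> sqbox \<rho>"
  shows "(S a has_derivative (\<lambda>v. S (Dx a) q * fst v + S (Dy a) q * snd v)) (at q)"
proof -
  obtain x0 y0 where q0: "q = (x0,y0)" by fastforce
  define \<sigma> where "\<sigma> = \<rho> - max \<bar>x0\<bar> \<bar>y0\<bar>"
  have \<sigma>: "0 < \<sigma>" using q by (auto simp: sqbox_def q0 \<sigma>_def)
  obtain b where b: "cv b \<sigma>" "\<forall>v\<in>sqbox \<sigma>. S a (x0 + fst v, y0 + snd v) = S b v"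
    "b 1 0 = S (Dx a) (x0,y0)" "b 0 1 = S (Dy a) (x0,y0)"
    using shift_lemma[OF cv, of x0 y0] q by (auto simp: sqbox_def q0 \<sigma>_def)
  define L where "L = (\<lambda>v::real\<times>real. S (Dx a) q * fst v + S (Dy a) q * snd v)"
  have "(S b has_derivative (\<lambda>v. b 1 0 * fst v + b 0 1 * snd v)) (at 0)"
    by (rule frechet0[OF b(1) \<sigma>])
  then have "(S b has_derivative L) (at 0)" unfolding b(3,4) L_def q0 .
  then have d2: "((\<lambda>v. S a (q + v)) has_derivative L) (at 0)"
  proof (rule has_derivative_transform_within_open)
    show "open (sqbox \<sigma>)" by (rule open_sqbox)
    show "0 \<in> sqbox \<sigma>" using \<sigma> by (simp add: sqbox_def)
    fix v assume "v \<in> sqbox \<sigma>"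
    then show "S b v = S a (q + v)" using b(2) by (cases v) (auto simp: q0)
  qed
  have d1: "((\<lambda>x. x - q) has_derivative (\<lambda>h. h)) (at q)"
    using has_derivative_diff[OF has_derivative_ident has_derivative_const[of q]] by simp
  have d2': "((\<lambda>v. S a (q + v)) has_derivative L) (at ((\<lambda>x. x - q) q))" using d2 by simp
  have "((\<lambda>x. S a (q + (x - q))) has_derivative (\<lambda>x. L x)) (at q)"
    by (rule has_derivative_compose[OF d1 d2'])
  then show ?thesis by (simp add: L_def)
qed

lemma deriv_px_py:
  assumes "(f has_derivative (\<lambda>v. A * fst v + B * snd v)) (at q)"
  shows "px f q = A" "py f q = B"
proof -
  have i1: "((\<lambda>t. (t, snd q)) has_derivative (\<lambda>h. (h, 0))) (at (fst q))"
    by (rule has_derivative_Pair[OF has_derivative_ident has_derivative_const])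
  have f1: "(f has_derivative (\<lambda>v. A * fst v + B * snd v)) (at ((\<lambda>t. (t, snd q)) (fst q)))"
    using assms by simp
  have hd: "((\<lambda>t. f (t, snd q)) has_derivative (\<lambda>h. A * fst (h, 0::real) + B * snd (h, 0::real))) (at (fst q))"
    by (rule has_derivative_compose[OF i1 f1])
  have eq: "(\<lambda>h. A * fst (h, 0::real) + B * snd (h, 0::real)) = (*) A" by (rule ext) simp
  have "((\<lambda>t. f (t, snd q)) has_derivative (*) A) (at (fst q))" using hd unfolding eq .
  then have "((\<lambda>t. f (t, snd q)) has_field_derivative A) (at (fst q))"
    by (simp add: has_field_derivative_def)
  then show "px f q = A" by (simp add: px_def DERIV_imp_deriv)
  have i2: "((\<lambda>t. (fst q, t)) has_derivative (\<lambda>h. (0, h))) (at (snd q))"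
    by (rule has_derivative_Pair[OF has_derivative_const has_derivative_ident])
  have f2: "(f has_derivative (\<lambda>v. A * fst v + B * snd v)) (at ((\<lambda>t. (fst q, t)) (snd q)))"
    using assms by simp
  have hd2: "((\<lambda>t. f (fst q, t)) has_derivative (\<lambda>h. A * fst (0::real, h) + B * snd (0::real, h))) (at (snd q))"
    by (rule has_derivative_compose[OF i2 f2])
  have eq2: "(\<lambda>h. A * fst (0::real, h) + B * snd (0::real, h)) = (*) B" by (rule ext) simp
  have "((\<lambda>t. f (fst q, t)) has_derivative (*) B) (at (snd q))" using hd2 unfolding eq2 .
  then have "((\<lambda>t. f (fst q, t)) has_field_derivative B) (at (snd q))"
    by (simp add: has_field_derivative_def)
  then show "py f q = B" by (simp add: py_def DERIV_imp_deriv)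
qed

definition rep :: "(real \<times> real \<Rightarrow> real) \<Rightarrow> (nat \<Rightarrow> nat \<Rightarrow> real) \<Rightarrow> real \<Rightarrow> bool" where
  "rep f a \<rho> \<longleftrightarrow> cv a \<rho> \<and> (\<forall>q\<in>sqbox \<rho>. f q = S a q)"

lemma rep_deriv:
  assumes "rep f a \<rho>" "q \<in> sqbox \<rho>"
  shows "(f has_derivative (\<lambda>v. S (Dx a) q * fst v + S (Dy a) q * snd v)) (at q)"
proof -
  have "(S a has_derivative (\<lambda>v. S (Dx a) q * fst v + S (Dy a) q * snd v)) (at q)"
    using S_deriv assms unfolding rep_def by blast
  then show ?thesis
    by (rule has_derivative_transform_within_open[OF _ open_sqbox]) (use assms in \<open>auto simp: rep_def\<close>)
qed

lemma rep_px: "rep f a \<rho> \<Longrightarrow> q \<in> sqbox \<rho> \<Longrightarrow> px f q = S (Dx a) q"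
  using deriv_px_py(1)[OF rep_deriv] .

lemma rep_py: "rep f a \<rho> \<Longrightarrow> q \<in> sqbox \<rho> \<Longrightarrow> py f q = S (Dy a) q"
  using deriv_px_py(2)[OF rep_deriv] .

lemma rep_Dx: "rep f a \<rho> \<Longrightarrow> rep (px f) (Dx a) \<rho>"
  using rep_px cv_Dx unfolding rep_def by blast

lemma rep_Dy: "rep f a \<rho> \<Longrightarrow> rep (py f) (Dy a) \<rho>"
  using rep_py cv_Dy unfolding rep_def by blast

lemma rep_grad:
  assumes "rep f a \<rho>" "q \<in> sqbox \<rho>"
  shows "(f has_derivative (\<lambda>v. inner (grad f q) v)) (at q)"
proof -
  have "(\<lambda>v. inner (grad f q) v) = (\<lambda>v. S (Dx a) q * fst v + S (Dy a) q * snd v)"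
    using rep_px[OF assms] rep_py[OF assms] by (auto simp: grad_def inner_prod_def)
  then show ?thesis using rep_deriv[OF assms] by simp
qed

lemma rep_cont: "rep f a \<rho> \<Longrightarrow> q \<in> sqbox \<rho> \<Longrightarrow> continuous (at q) f"
  using rep_deriv has_derivative_continuous by blast

lemma rep_mono: "rep f a \<rho> \<Longrightarrow> \<rho>' \<le> \<rho> \<Longrightarrow> rep f a \<rho>'"
  unfolding rep_def using cv_mono by (auto simp: sqbox_def)



lemma cv_divt: assumes "cv b \<rho>" shows "cv (\<lambda>i j. b i (j+k)) \<rho>"
  unfolding cv_def
proof (intro allI impI)
  fix r assume r: "0 < r \<and> r < \<rho>"
  have s0: "(\<lambda>(i,j). \<bar>b i j\<bar> * r ^ (i+j)) summable_on UNIV" using assms r by (auto simp: cv_def)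
  have "(\<lambda>(i,j). \<bar>b i j\<bar> * r ^ (i+j)) summable_on ((\<lambda>(i,j). (i,j+k)) ` UNIV)"
    by (rule summable_on_subset_banach[OF s0]) auto
  then have "((\<lambda>(i,j). \<bar>b i j\<bar> * r ^ (i+j)) \<circ> (\<lambda>(i,j). (i,j+k))) summable_on UNIV"
    by (subst summable_on_reindex[symmetric]) (auto simp: inj_on_def)
  then have s1: "(\<lambda>x. (1 / r^k) * ((\<lambda>(i,j). \<bar>b i j\<bar> * r ^ (i+j)) \<circ> (\<lambda>(i,j). (i,j+k))) x) summable_on UNIV"
    by (rule summable_on_cmult_right)
  show "(\<lambda>(i,j). \<bar>b i (j+k)\<bar> * r ^ (i+j)) summable_on UNIV"
  proof (rule summable_on_cong[THEN iffD1, OF _ s1])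
    fix x :: "nat \<times> nat" obtain i j where x: "x = (i,j)" by fastforce
    show "(1 / r^k) * ((\<lambda>(i,j). \<bar>b i j\<bar> * r ^ (i+j)) \<circ> (\<lambda>(i,j). (i,j+k))) x = (case x of (i,j) \<Rightarrow> \<bar>b i (j+k)\<bar> * r ^ (i+j))"
      using r by (simp add: x power_add)
  qed
qed

lemma cv_divs: assumes "cv b \<rho>" shows "cv (\<lambda>i j. b (i+k) j) \<rho>"
  unfolding cv_def
proof (intro allI impI)
  fix r assume r: "0 < r \<and> r < \<rho>"
  have s0: "(\<lambda>(i,j). \<bar>b i j\<bar> * r ^ (i+j)) summable_on UNIV" using assms r by (auto simp: cv_def)
  have "(\<lambda>(i,j). \<bar>b i j\<bar> * r ^ (i+j)) summable_on ((\<lambda>(i,j). (i+k,j)) ` UNIV)"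
    by (rule summable_on_subset_banach[OF s0]) auto
  then have "((\<lambda>(i,j). \<bar>b i j\<bar> * r ^ (i+j)) \<circ> (\<lambda>(i,j). (i+k,j))) summable_on UNIV"
    by (subst summable_on_reindex[symmetric]) (auto simp: inj_on_def)
  then have s1: "(\<lambda>x. (1 / r^k) * ((\<lambda>(i,j). \<bar>b i j\<bar> * r ^ (i+j)) \<circ> (\<lambda>(i,j). (i+k,j))) x) summable_on UNIV"
    by (rule summable_on_cmult_right)
  show "(\<lambda>(i,j). \<bar>b (i+k) j\<bar> * r ^ (i+j)) summable_on UNIV"
  proof (rule summable_on_cong[THEN iffD1, OF _ s1])
    fix x :: "nat \<times> nat" obtain i j where x: "x = (i,j)" by fastforce
    show "(1 / r^k) * ((\<lambda>(i,j). \<bar>b i j\<bar> * r ^ (i+j)) \<circ> (\<lambda>(i,j). (i+k,j))) x = (case x of (i,j) \<Rightarrow> \<bar>b (i+k) j\<bar> * r ^ (i+j))"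
      using r by (simp add: x power_add)
  qed
qed

lemma divt_lemma:
  assumes cv: "cv b \<rho>" and z: "\<And>i j. j < k \<Longrightarrow> b i j = 0" and q: "q \<in> sqbox \<rho>"
  shows "S b q = snd q ^ k * S (\<lambda>i j. b i (j+k)) q"
proof -
  define b' where "b' = (\<lambda>i j. b i (j+k))"
  have h1: "(trm b' q has_sum S b' q) UNIV" unfolding b'_def by (rule S_has_sum[OF cv_divt[OF cv] q])
  have h2: "((\<lambda>x. snd q ^ k * trm b' q x) has_sum (snd q ^ k * S b' q)) UNIV"
    by (rule has_sum_cmult_right[OF h1])
  have "((trm b q \<circ> (\<lambda>(i,j). (i,j+k))) has_sum (snd q ^ k * S b' q)) UNIV"
    by (rule has_sum_cong[THEN iffD1, OF _ h2]) (auto simp: trm_def b'_def power_add)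
  then have "(trm b q has_sum (snd q ^ k * S b' q)) ((\<lambda>(i,j). (i,j+k)) ` UNIV)"
    by (subst has_sum_reindex) (auto simp: inj_on_def)
  then have "(trm b q has_sum (snd q ^ k * S b' q)) UNIV"
  proof (rule has_sum_cong_neutral[THEN iffD1, rotated -1])
    fix x :: "nat \<times> nat" assume "x \<in> UNIV - (\<lambda>(i,j). (i,j+k)) ` UNIV"
    then obtain i j where x: "x = (i,j)" "j < k"
      by (cases x) (metis (no_types, lifting) DiffD2 case_prod_conv le_add_diff_inverse2 not_le rangeI)
    then show "trm b q x = 0" by (simp add: trm_def z)
  qed auto
  then show ?thesis unfolding S_def b'_def by (simp add: infsumI)
qed

lemma divs_lemma:
  assumes cv: "cv b \<rho>" and z: "\<And>i j. i < k \<Longrightarrow> b i j = 0" and q: "q \<in> sqbox \<rho>"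
  shows "S b q = fst q ^ k * S (\<lambda>i j. b (i+k) j) q"
proof -
  define b' where "b' = (\<lambda>i j. b (i+k) j)"
  have h1: "(trm b' q has_sum S b' q) UNIV" unfolding b'_def by (rule S_has_sum[OF cv_divs[OF cv] q])
  have h2: "((\<lambda>x. fst q ^ k * trm b' q x) has_sum (fst q ^ k * S b' q)) UNIV"
    by (rule has_sum_cmult_right[OF h1])
  have "((trm b q \<circ> (\<lambda>(i,j). (i+k,j))) has_sum (fst q ^ k * S b' q)) UNIV"
    by (rule has_sum_cong[THEN iffD1, OF _ h2]) (auto simp: trm_def b'_def power_add)
  then have "(trm b q has_sum (fst q ^ k * S b' q)) ((\<lambda>(i,j). (i+k,j)) ` UNIV)"
    by (subst has_sum_reindex) (auto simp: inj_on_def)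
  then have "(trm b q has_sum (fst q ^ k * S b' q)) UNIV"
  proof (rule has_sum_cong_neutral[THEN iffD1, rotated -1])
    fix x :: "nat \<times> nat" assume "x \<in> UNIV - (\<lambda>(i,j). (i+k,j)) ` UNIV"
    then obtain i j where x: "x = (i,j)" "i < k"
      by (cases x) (metis (no_types, lifting) DiffD2 case_prod_conv le_add_diff_inverse2 not_le rangeI)
    then show "trm b q x = 0" by (simp add: trm_def z)
  qed auto
  then show ?thesis unfolding S_def b'_def by (simp add: infsumI)
qed

lemma rep_S: "cv b \<rho> \<Longrightarrow> rep (S b) b \<rho>"
  by (simp add: rep_def)

definition row0 :: "(nat \<Rightarrow> nat \<Rightarrow> real) \<Rightarrow> nat \<Rightarrow> nat \<Rightarrow> real" where
  "row0 b = (\<lambda>i j. if j = 0 then b i 0 else 0)"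

lemma S_row0: "S b (s,0) = S (row0 b) (s,0)"
  unfolding S_def trm_def row0_def
  by (intro infsum_cong) (auto simp: zero_power)

lemma cv_row0: assumes "cv b \<rho>" shows "cv (row0 b) \<rho>"
  unfolding cv_def
proof (intro allI impI)
  fix r assume r: "0 < r \<and> r < \<rho>"
  have s0: "(\<lambda>(i,j). \<bar>b i j\<bar> * r ^ (i+j)) summable_on UNIV" using assms r by (auto simp: cv_def)
  show "(\<lambda>(i,j). \<bar>row0 b i j\<bar> * r ^ (i+j)) summable_on UNIV"
    by (rule summable_on_comparison_test[OF s0]) (use r in \<open>auto simp: row0_def\<close>)
qed

lemma Z1:
  assumes cv: "cv b \<rho>" and \<rho>: "0 < \<rho>" and nz: "b i0 0 \<noteq> 0"
  shows "\<exists>\<epsilon>>0. \<forall>s. 0 < \<bar>s\<bar> \<and> \<bar>s\<bar> < \<epsilon> \<longrightarrow> S b (s,0) \<noteq> 0"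
proof -
  define N where "N = (LEAST i. b i 0 \<noteq> 0)"
  have bN: "b N 0 \<noteq> 0" unfolding N_def by (rule LeastI[of _ i0]) (rule nz)
  have zN: "row0 b i j = 0" if "i < N" for i j
    using not_less_Least[OF that[unfolded N_def]] by (auto simp: row0_def)
  define b' where "b' = (\<lambda>i j. row0 b (i+N) j)"
  have cv0: "cv (row0 b) \<rho>" by (rule cv_row0[OF cv])
  have cv': "cv b' \<rho>" unfolding b'_def by (rule cv_divs[OF cv0])
  have "continuous (at 0) (S b')" by (rule rep_cont[OF rep_S[OF cv']]) (use \<rho> in \<open>simp add: sqbox_def\<close>)
  moreover have "S b' 0 \<noteq> 0" using bN by (simp add: S_zero b'_def row0_def)
  ultimately obtain e where e: "e > 0" "\<And>y. dist 0 y < e \<Longrightarrow> S b' y \<noteq> 0"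
    using continuous_at_avoid by blast
  show ?thesis
  proof (intro exI[of _ "min e \<rho>"] conjI allI impI)
    show "0 < min e \<rho>" using e \<rho> by simp
    fix s assume s: "0 < \<bar>s\<bar> \<and> \<bar>s\<bar> < min e \<rho>"
    have box: "(s,0) \<in> sqbox \<rho>" using s \<rho> by (simp add: sqbox_def)
    have "S b (s,0) = S (row0 b) (s,0)" by (rule S_row0)
    also have "\<dots> = s^N * S b' (s,0)"
      using divs_lemma[OF cv0 zN box] by (simp add: b'_def)
    finally have eq: "S b (s,0) = s^N * S b' (s,0)" .
    have "dist 0 (s,0::real) = \<bar>s\<bar>" by (simp add: zero_prod_def dist_Pair_Pair)
    then have "dist 0 (s,0::real) < e" using s by simp
    then have "S b' (s,0) \<noteq> 0" by (rule e(2))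
    then show "S b (s,0) \<noteq> 0" using s by (simp add: eq)
  qed
qed

lemma Z1_zero:
  assumes cv: "cv b \<rho>" and \<rho>: "0 < \<rho>" and e: "0 < e" and z: "\<And>s. \<bar>s\<bar> < e \<Longrightarrow> S b (s,0) = 0"
  shows "b i 0 = 0"
proof (rule ccontr)
  assume "b i 0 \<noteq> 0"
  from Z1[OF cv \<rho> this] obtain \<epsilon> where \<epsilon>: "\<epsilon> > 0" "\<And>s. 0 < \<bar>s\<bar> \<and> \<bar>s\<bar> < \<epsilon> \<Longrightarrow> S b (s,0) \<noteq> 0" by blast
  define s where "s = min \<epsilon> e / 2"
  have "0 < \<bar>s\<bar> \<and> \<bar>s\<bar> < \<epsilon>" "\<bar>s\<bar> < e" using \<epsilon> e by (auto simp: s_def)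
  then show False using \<epsilon>(2) z by blast
qed



lemma S_zero_coeffs: "S (\<lambda>i j. 0) q = 0"
  unfolding S_def trm_def by (simp add: case_prod_unfold)

lemma identity1:
  assumes loc: "\<And>w. \<bar>w\<bar> < R \<Longrightarrow> \<exists>r>0. \<exists>b. cv b r \<and> (\<forall>v. \<bar>v - w\<bar> < r \<longrightarrow> k v = S b (v - w, 0))"
    and e: "0 < \<epsilon>" and z: "\<And>v. \<bar>v\<bar> < \<epsilon> \<Longrightarrow> k v = 0" and v: "\<bar>v\<bar> < R"
  shows "k v = 0"
proof -
  define A where "A = {-R<..<R}"
  define Z where "Z = {w. \<exists>\<delta>>0. \<forall>v. \<bar>v - w\<bar> < \<delta> \<longrightarrow> k v = 0}"
  define V where "V = {w. \<exists>\<delta>>0. \<forall>v. 0 < \<bar>v - w\<bar> \<and> \<bar>v - w\<bar> < \<delta> \<longrightarrow> k v \<noteq> 0}"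
  have oZ: "open Z" unfolding open_dist
  proof
    fix w assume "w \<in> Z"
    then obtain \<delta> where \<delta>: "\<delta> > 0" "\<And>v. \<bar>v - w\<bar> < \<delta> \<Longrightarrow> k v = 0" unfolding Z_def by blast
    show "\<exists>e>0. \<forall>y. dist y w < e \<longrightarrow> y \<in> Z"
    proof (intro exI[of _ "\<delta>/2"] conjI allI impI)
      fix y assume y: "dist y w < \<delta>/2"
      show "y \<in> Z" unfolding Z_def
      proof (intro CollectI exI[of _ "\<delta>/2"] conjI allI impI)
        fix v assume "\<bar>v - y\<bar> < \<delta>/2"
        then have "\<bar>v - w\<bar> < \<delta>" using y abs_triangle_ineq[of "v - y" "y - w"] by (simp add: dist_real_def)
        then show "k v = 0" by (rule \<delta>(2))
      qed (use \<delta> in simp)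
    qed (use \<delta> in simp)
  qed
  have oV: "open V" unfolding open_dist
  proof
    fix w assume "w \<in> V"
    then obtain \<delta> where \<delta>: "\<delta> > 0" "\<And>v. 0 < \<bar>v - w\<bar> \<and> \<bar>v - w\<bar> < \<delta> \<Longrightarrow> k v \<noteq> 0" unfolding V_def by blast
    show "\<exists>e>0. \<forall>y. dist y w < e \<longrightarrow> y \<in> V"
    proof (intro exI[of _ "\<delta>/2"] conjI allI impI)
      fix y assume y: "dist y w < \<delta>/2"
      show "y \<in> V"
      proof (cases "y = w")
        case True then show ?thesis using \<open>w \<in> V\<close> by simp
      next
        case False
        show ?thesis unfolding V_def
        proof (intro CollectI exI[of _ "\<bar>y - w\<bar>"] conjI allI impI)
          show "0 < \<bar>y - w\<bar>" using False by simp
          fix v assume vv: "0 < \<bar>v - y\<bar> \<and> \<bar>v - y\<bar> < \<bar>y - w\<bar>"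
          have "0 < \<bar>v - w\<bar> \<and> \<bar>v - w\<bar> < \<delta>" using vv y abs_triangle_ineq[of "v - y" "y - w"] by (auto simp: dist_real_def)
          then show "k v \<noteq> 0" by (rule \<delta>(2))
        qed
      qed
    qed (use \<delta> in simp)
  qed
  have disj: "Z \<inter> V \<inter> A = {}"
  proof (rule ccontr)
    assume "Z \<inter> V \<inter> A \<noteq> {}"
    then obtain w where "w \<in> Z" "w \<in> V" by blast
    then obtain \<delta>1 \<delta>2 where d: "\<delta>1 > 0" "\<And>v. \<bar>v - w\<bar> < \<delta>1 \<Longrightarrow> k v = 0"
      "\<delta>2 > 0" "\<And>v. 0 < \<bar>v - w\<bar> \<and> \<bar>v - w\<bar> < \<delta>2 \<Longrightarrow> k v \<noteq> 0"
      unfolding Z_def V_def by blast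
    define v where "v = w + min \<delta>1 \<delta>2 / 2"
    have "\<bar>v - w\<bar> < \<delta>1" "0 < \<bar>v - w\<bar> \<and> \<bar>v - w\<bar> < \<delta>2" using d by (auto simp: v_def)
    then show False using d by blast
  qed
  have cover: "A \<subseteq> Z \<union> V"
  proof
    fix w assume wA: "w \<in> A"
    show "w \<in> Z \<union> V"
    proof (cases "w \<in> Z")
      case False
      have wR: "\<bar>w\<bar> < R" using wA by (auto simp: A_def)
      obtain r b where rb: "r > 0" "cv b r" "\<And>v. \<bar>v - w\<bar> < r \<Longrightarrow> k v = S b (v - w, 0)"
        using loc[OF wR] by blast
      have "\<exists>i. b i 0 \<noteq> 0"
      proof (rule ccontr)
        assume "\<not> (\<exists>i. b i 0 \<noteq> 0)"
        then have "row0 b = (\<lambda>i j. 0)" by (auto simp: row0_def fun_eq_iff)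
        then have "\<And>v. \<bar>v - w\<bar> < r \<Longrightarrow> k v = 0"
          using rb(3) S_row0[of b] by (simp add: S_zero_coeffs)
        then have "w \<in> Z" unfolding Z_def using rb(1) by blast
        then show False using False by simp
      qed
      then obtain i where "b i 0 \<noteq> 0" by blast
      from Z1[OF rb(2) rb(1) this] obtain \<epsilon>' where \<epsilon>': "\<epsilon>' > 0" "\<And>s. 0 < \<bar>s\<bar> \<and> \<bar>s\<bar> < \<epsilon>' \<Longrightarrow> S b (s,0) \<noteq> 0"
        by blast
      have "w \<in> V" unfolding V_def
      proof (intro CollectI exI[of _ "min \<epsilon>' r"] conjI allI impI)
        show "0 < min \<epsilon>' r" using \<epsilon>' rb by simp
        fix v assume "0 < \<bar>v - w\<bar> \<and> \<bar>v - w\<bar> < min \<epsilon>' r"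
        then show "k v \<noteq> 0" using rb(3) \<epsilon>'(2) by auto
      qed
      then show ?thesis by simp
    qed simp
  qed
  have "Z \<inter> A = {} \<or> V \<inter> A = {}"
    by (rule connectedD[OF _ oZ oV disj cover]) (simp add: A_def)
  moreover have "0 \<in> Z \<inter> A" using e z v unfolding Z_def A_def by auto
  ultimately have "V \<inter> A = {}" by blast
  moreover have "v \<in> A" using v by (auto simp: A_def abs_less_iff)
  ultimately have "v \<in> Z" using cover by blast
  then show ?thesis unfolding Z_def by auto
qed

lemma line_exp:
  assumes an: "real_analytic_on2 h (ball 0 R)" and u: "norm u = 1" and w0: "\<bar>w0\<bar> < R"
  shows "\<exists>r>0. \<exists>b. cv b r \<and> (\<forall>v. \<bar>v - w0\<bar> < r \<longrightarrow> h (v *\<^sub>R u) = S b (v - w0, 0))"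
proof -
  define p0 where "p0 = w0 *\<^sub>R u"
  have p0: "p0 \<in> ball 0 R" using w0 u by (simp add: p0_def)
  obtain r a where r: "r > 0" "ball p0 r \<subseteq> ball 0 R"
    "\<And>q. q \<in> ball p0 r \<Longrightarrow> ((\<lambda>(i,j). a i j * (fst q - fst p0) ^ i * (snd q - snd p0) ^ j) has_sum h q) UNIV"
    using an p0 unfolding real_analytic_on2_def by blast
  define T where "T = (\<lambda>(i::nat,j::nat). a i j * fst u ^ i * snd u ^ j)"
  define P :: "nat \<times> nat \<Rightarrow> nat" where "P = (\<lambda>(i,j). i + j)"
  define Q :: "nat \<times> nat \<Rightarrow> nat" where "Q = (\<lambda>_. 0)"
  define b where "b = (\<lambda>n m. infsum T {k\<in>UNIV. (P k, Q k) = (n,m)})"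
  have key: "(\<lambda>k. \<bar>T k\<bar> * \<sigma>^(P k + Q k)) summable_on UNIV" if \<sigma>: "0 < \<sigma>" "\<sigma> < r" for \<sigma>
  proof -
    define q where "q = p0 + (\<sigma> * \<bar>fst u\<bar>, \<sigma> * \<bar>snd u\<bar>)"
    have nrm: "norm (\<sigma> * \<bar>fst u\<bar>, \<sigma> * \<bar>snd u\<bar>) = \<sigma> * norm u"
      using \<sigma> by (cases u) (simp add: norm_Pair power_mult_distrib real_sqrt_mult distrib_left[symmetric])
    have "q - p0 = (\<sigma> * \<bar>fst u\<bar>, \<sigma> * \<bar>snd u\<bar>)" by (simp add: q_def)
    then have "dist q p0 = \<sigma>" using nrm u by (simp only: dist_norm)
    then have "dist p0 q = \<sigma>" by (simp add: dist_commute)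
    then have "q \<in> ball p0 r" using \<sigma> by simp
    from r(3)[OF this] have "(\<lambda>(i,j). a i j * (fst q - fst p0) ^ i * (snd q - snd p0) ^ j) summable_on UNIV"
      by (rule has_sum_imp_summable)
    then have "(\<lambda>x. norm ((\<lambda>(i,j). a i j * (fst q - fst p0) ^ i * (snd q - snd p0) ^ j) x)) summable_on UNIV"
      using summable_on_iff_abs_summable_on_real by blast
    then show ?thesis
      by (rule summable_on_cong[THEN iffD1, rotated])
         (use \<sigma> in \<open>auto simp: q_def T_def P_def Q_def abs_mult power_abs power_mult_distrib power_add mult_ac\<close>)
  qed
  have cvb: "cv b r" unfolding cv_def b_def using group_lemma(1)[OF key] by auto
  have eq: "h (v *\<^sub>R u) = S b (v - w0, 0)" if v: "\<bar>v - w0\<bar> < r" for v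
  proof -
    define s where "s = v - w0"
    define \<sigma> where "\<sigma> = (\<bar>s\<bar> + r) / 2"
    have \<sigma>: "0 < \<sigma>" "\<sigma> < r" "\<bar>s\<bar> \<le> \<sigma>" using v r by (auto simp: \<sigma>_def s_def)
    have h1: "((\<lambda>k. T k * s^P k * 0^Q k) has_sum S b (s,0)) UNIV"
      unfolding b_def by (rule group_lemma(2)[OF key[OF \<sigma>(1,2)] \<sigma>(1,3)]) (use \<sigma> in simp)
    have vb: "v *\<^sub>R u \<in> ball p0 r"
      using v u by (simp add: p0_def dist_norm scaleR_diff_left[symmetric])
    have h2: "((\<lambda>(i,j). a i j * (fst (v *\<^sub>R u) - fst p0) ^ i * (snd (v *\<^sub>R u) - snd p0) ^ j) has_sum h (v *\<^sub>R u)) UNIV"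
      by (rule r(3)[OF vb])
    have f1: "fst (v *\<^sub>R u) - fst p0 = s * fst u" by (simp add: p0_def s_def algebra_simps)
    have f2: "snd (v *\<^sub>R u) - snd p0 = s * snd u" by (simp add: p0_def s_def algebra_simps)
    have "(\<lambda>(i,j). a i j * (fst (v *\<^sub>R u) - fst p0) ^ i * (snd (v *\<^sub>R u) - snd p0) ^ j) = (\<lambda>k. T k * s^P k * 0^Q k)"
      unfolding f1 f2 by (auto simp: fun_eq_iff T_def P_def Q_def power_mult_distrib power_add mult_ac)
    with h2 have "((\<lambda>k. T k * s^P k * 0^Q k) has_sum h (v *\<^sub>R u)) UNIV" by simp
    then show ?thesis using h1 has_sum_unique s_def by blast
  qed
  show ?thesis using r(1) cvb eq by blast
qed

lemma identity2:
  assumes an: "real_analytic_on2 h (ball 0 R)" and e: "0 < \<epsilon>" and z: "\<And>q. q \<in> ball 0 \<epsilon> \<Longrightarrow> h q = 0"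
    and q: "q \<in> ball 0 R"
  shows "h q = 0"
proof (cases "q = 0")
  case True then show ?thesis using z e by simp
next
  case False
  define u where "u = (1 / norm q) *\<^sub>R q"
  have u: "norm u = 1" using False by (simp add: u_def)
  have "h ((norm q) *\<^sub>R u) = 0"
  proof (rule identity1[where k="\<lambda>w. h (w *\<^sub>R u)" and R=R and \<epsilon>=\<epsilon>])
    show "\<And>w. \<bar>w\<bar> < R \<Longrightarrow> \<exists>r>0. \<exists>b. cv b r \<and> (\<forall>v. \<bar>v - w\<bar> < r \<longrightarrow> h (v *\<^sub>R u) = S b (v - w, 0))"
      by (rule line_exp[OF an u])
    show "0 < \<epsilon>" by (rule e)
    show "\<And>v. \<bar>v\<bar> < \<epsilon> \<Longrightarrow> h (v *\<^sub>R u) = 0" using u by (intro z) simp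
    show "\<bar>norm q\<bar> < R" using q by simp
  qed
  moreover have "(norm q) *\<^sub>R u = q" using False by (simp add: u_def)
  ultimately show ?thesis by simp
qed



lemma unit_facts:
  fixes d :: "real \<times> real" assumes "norm d = 1"
  shows "fst d ^ 2 + snd d ^ 2 = 1" "\<bar>fst d\<bar> \<le> 1" "\<bar>snd d\<bar> \<le> 1"
proof -
  have "sqrt (fst d ^ 2 + snd d ^ 2) = 1" using assms by (cases d) (simp add: norm_Pair)
  then show s: "fst d ^ 2 + snd d ^ 2 = 1" by simp
  have "fst d ^ 2 \<le> 1" using s zero_le_power2[of "snd d"] by linarith
  moreover have "snd d ^ 2 \<le> 1" using s zero_le_power2[of "fst d"] by linarith
  ultimately have "fst d ^ 2 \<le> 1" "snd d ^ 2 \<le> 1" by auto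
  then show "\<bar>fst d\<bar> \<le> 1" "\<bar>snd d\<bar> \<le> 1" by (auto simp: abs_square_le_1)
qed

lemma decomp:
  fixes d v :: "real \<times> real" assumes "fst d ^ 2 + snd d ^ 2 = 1"
  shows "v = inner v d *\<^sub>R d + inner v (- snd d, fst d) *\<^sub>R (- snd d, fst d)"
proof -
  obtain v1 v2 where v: "v = (v1,v2)" by fastforce
  obtain d1 d2 where d: "d = (d1,d2)" by fastforce
  have h: "d1^2 + d2^2 = 1" using assms by (simp add: d)
  have e1: "(v1 * d1 + v2 * d2) * d1 + (v1 * (- d2) + v2 * d1) * (- d2) = v1 * (d1^2 + d2^2)"
    by (simp add: algebra_simps power2_eq_square)
  have e2: "(v1 * d1 + v2 * d2) * d2 + (v1 * (- d2) + v2 * d1) * d1 = v2 * (d1^2 + d2^2)"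
    by (simp add: algebra_simps power2_eq_square)
  show ?thesis using e1 e2 h by (simp add: v d)
qed

lemma seg_const:
  fixes f :: "real \<times> real \<Rightarrow> real"
  assumes I: "convex I" "0 \<in> I" "s \<in> I"
    and der: "\<And>t. t \<in> I \<Longrightarrow> (f has_derivative (\<lambda>v. inner (G t) v)) (at (p + t *\<^sub>R w))"
    and orth: "\<And>t. t \<in> I \<Longrightarrow> inner (G t) w = 0"
  shows "f (p + s *\<^sub>R w) = f p"
proof -
  have "((\<lambda>t. f (p + t *\<^sub>R w)) has_derivative (\<lambda>h. 0)) (at t within I)" if t: "t \<in> I" for t
  proof -
    have "((\<lambda>t. t *\<^sub>R w) has_derivative (\<lambda>h. h *\<^sub>R w)) (at t within I)"
      by (rule bounded_linear_imp_has_derivative[OF bounded_linear_scaleR_left])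
    then have l: "((\<lambda>t. p + t *\<^sub>R w) has_derivative (\<lambda>h. 0 + h *\<^sub>R w)) (at t within I)"
      by (rule has_derivative_add[OF has_derivative_const])
    have f': "(f has_derivative (\<lambda>v. inner (G t) v)) (at ((\<lambda>t. p + t *\<^sub>R w) t))"
      using der[OF t] by simp
    have "((\<lambda>t. f (p + t *\<^sub>R w)) has_derivative (\<lambda>h. inner (G t) (0 + h *\<^sub>R w))) (at t within I)"
      by (rule has_derivative_compose[OF l f'])
    moreover have "(\<lambda>h. inner (G t) (0 + h *\<^sub>R w)) = (\<lambda>h. 0)"
      using orth[OF t] by (simp add: fun_eq_iff)
    ultimately show ?thesis by simp
  qed
  then obtain c where c: "\<And>t. t \<in> I \<Longrightarrow> f (p + t *\<^sub>R w) = c"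
    using has_derivative_zero_constant[OF I(1)] by blast
  show ?thesis using c[OF I(3)] c[OF I(2)] by simp
qed

lemma inner_le_norm: "\<bar>inner (q::real\<times>real) d\<bar> \<le> norm q" if "norm d = 1"
  using Cauchy_Schwarz_ineq2[of q d] that by simp

lemma ANA:
  assumes cv1: "cv w1 \<sigma>" and cv2: "cv w2 \<sigma>" and U: "open U" "U \<subseteq> ball 0 \<sigma>"
    and d: "norm d = 1" and e: "norm e = 1"
  shows "real_analytic_on2 (\<lambda>q. k1 * S w1 (inner q d, inner q e) + k2 * S w2 (inner q d, inner q e)) U"
  unfolding real_analytic_on2_def
proof
  fix q0 assume q0: "q0 \<in> U"
  define s0 where "s0 = inner q0 d"
  define t0 where "t0 = inner q0 e"
  have nq0: "norm q0 < \<sigma>" using q0 U by auto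
  have st0: "\<bar>s0\<bar> < \<sigma>" "\<bar>t0\<bar> < \<sigma>"
    using inner_le_norm[OF d, of q0] inner_le_norm[OF e, of q0] nq0 by (auto simp: s0_def t0_def)
  define \<sigma>' where "\<sigma>' = \<sigma> - max \<bar>s0\<bar> \<bar>t0\<bar>"
  have \<sigma>': "0 < \<sigma>'" using st0 by (simp add: \<sigma>'_def)
  obtain b1 where b1: "cv b1 \<sigma>'" "\<forall>v\<in>sqbox \<sigma>'. S w1 (s0 + fst v, t0 + snd v) = S b1 v"
    using shift_lemma[OF cv1 st0] unfolding \<sigma>'_def by blast
  obtain b2 where b2: "cv b2 \<sigma>'" "\<forall>v\<in>sqbox \<sigma>'. S w2 (s0 + fst v, t0 + snd v) = S b2 v"
    using shift_lemma[OF cv2 st0] unfolding \<sigma>'_def by blast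
  have dd: "\<bar>fst d\<bar> + \<bar>snd d\<bar> \<le> 2" "\<bar>fst e\<bar> + \<bar>snd e\<bar> \<le> 2"
    using unit_facts[OF d] unit_facts[OF e] by auto
  obtain b1' where b1': "cv b1' (\<sigma>'/2)"
    "\<forall>q\<in>sqbox (\<sigma>'/2). S b1 (fst d * fst q + snd d * snd q, fst e * fst q + snd e * snd q) = S b1' q"
    using lin_lemma[OF b1(1), of 2 "fst d" "snd d" "fst e" "snd e"] dd by auto
  obtain b2' where b2': "cv b2' (\<sigma>'/2)"
    "\<forall>q\<in>sqbox (\<sigma>'/2). S b2 (fst d * fst q + snd d * snd q, fst e * fst q + snd e * snd q) = S b2' q"
    using lin_lemma[OF b2(1), of 2 "fst d" "snd d" "fst e" "snd e"] dd by auto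
  obtain \<epsilon> where \<epsilon>: "\<epsilon> > 0" "ball q0 \<epsilon> \<subseteq> U" using U(1) q0 open_contains_ball by blast
  define rr where "rr = min \<epsilon> (\<sigma>'/2)"
  define a' where "a' = (\<lambda>i j. k1 * b1' i j + k2 * b2' i j)"
  have cva: "cv a' (\<sigma>'/2)" unfolding a'_def by (rule cv_lin[OF b1'(1) b2'(1)])
  show "\<exists>r>0. ball q0 r \<subseteq> U \<and> (\<exists>a. \<forall>q\<in>ball q0 r.
          ((\<lambda>(i,j). a i j * (fst q - fst q0) ^ i * (snd q - snd q0) ^ j) has_sum
             (k1 * S w1 (inner q d, inner q e) + k2 * S w2 (inner q d, inner q e))) UNIV)"
  proof (intro exI[of _ rr] conjI exI[of _ a'] ballI)
    show "0 < rr" using \<epsilon> \<sigma>' by (simp add: rr_def)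
    show "ball q0 rr \<subseteq> U" using \<epsilon> by (auto simp: rr_def)
    fix q assume q: "q \<in> ball q0 rr"
    define v where "v = q - q0"
    have nv: "norm v < \<sigma>'/2" using q by (simp add: v_def rr_def dist_norm norm_minus_commute)
    have vbox: "v \<in> sqbox (\<sigma>'/2)" using nv ball_sqbox[of "\<sigma>'/2"] by auto
    have c1: "\<bar>fst v\<bar> < \<sigma>'/2" "\<bar>snd v\<bar> < \<sigma>'/2" using vbox by (auto simp: sqbox_def)
    have lb: "(fst d * fst v + snd d * snd v, fst e * fst v + snd e * snd v) \<in> sqbox \<sigma>'"
    proof -
      have "\<bar>fst d * fst v + snd d * snd v\<bar> \<le> \<bar>fst v\<bar> + \<bar>snd v\<bar>"
        using unit_facts[OF d] abs_triangle_ineq[of "fst d * fst v" "snd d * snd v"]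
          mult_mono[of "\<bar>fst d\<bar>" 1 "\<bar>fst v\<bar>" "\<bar>fst v\<bar>"] mult_mono[of "\<bar>snd d\<bar>" 1 "\<bar>snd v\<bar>" "\<bar>snd v\<bar>"]
        by (simp add: abs_mult)
      moreover have "\<bar>fst e * fst v + snd e * snd v\<bar> \<le> \<bar>fst v\<bar> + \<bar>snd v\<bar>"
        using unit_facts[OF e] abs_triangle_ineq[of "fst e * fst v" "snd e * snd v"]
          mult_mono[of "\<bar>fst e\<bar>" 1 "\<bar>fst v\<bar>" "\<bar>fst v\<bar>"] mult_mono[of "\<bar>snd e\<bar>" 1 "\<bar>snd v\<bar>" "\<bar>snd v\<bar>"]
        by (simp add: abs_mult)
      ultimately show ?thesis using c1 by (auto simp: sqbox_def)
    qed
    have iq: "inner q d = s0 + (fst d * fst v + snd d * snd v)" "inner q e = t0 + (fst e * fst v + snd e * snd v)"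
      by (simp_all add: s0_def t0_def v_def inner_prod_def algebra_simps)
    have "S w1 (inner q d, inner q e) = S b1' v"
      using b1(2)[rule_format, OF lb] b1'(2)[rule_format, OF vbox] by (simp add: iq)
    moreover have "S w2 (inner q d, inner q e) = S b2' v"
      using b2(2)[rule_format, OF lb] b2'(2)[rule_format, OF vbox] by (simp add: iq)
    ultimately have val: "k1 * S w1 (inner q d, inner q e) + k2 * S w2 (inner q d, inner q e) = S a' v"
      unfolding a'_def using S_lin[OF b1'(1) b2'(1) vbox] by simp
    have "(trm a' v has_sum S a' v) UNIV" by (rule S_has_sum[OF cva vbox])
    moreover have "trm a' v = (\<lambda>(i,j). a' i j * (fst q - fst q0) ^ i * (snd q - snd q0) ^ j)"
      by (simp add: trm_def v_def)
    ultimately show "((\<lambda>(i,j). a' i j * (fst q - fst q0) ^ i * (snd q - snd q0) ^ j) has_sum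
             (k1 * S w1 (inner q d, inner q e) + k2 * S w2 (inner q d, inner q e))) UNIV"
      using val by simp
  qed
qed



lemma span_sc: "(c::real) \<noteq> 0 \<Longrightarrow> span {c *\<^sub>R x} = span {x::real\<times>real}"
  unfolding span_singleton
proof (intro set_eqI iffI)
  fix y assume c: "c \<noteq> 0"
  { assume "y \<in> range (\<lambda>k. k *\<^sub>R (c *\<^sub>R x))"
    then obtain k where "y = k *\<^sub>R (c *\<^sub>R x)" by auto
    then show "y \<in> range (\<lambda>k. k *\<^sub>R x)" by (intro range_eqI[of _ _ "k*c"]) simp }
  { assume "y \<in> range (\<lambda>k. k *\<^sub>R x)"
    then obtain k where "y = k *\<^sub>R x" by auto
    then show "y \<in> range (\<lambda>k. k *\<^sub>R (c *\<^sub>R x))" using c by (intro range_eqI[of _ _ "k/c"]) simp }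
qed

lemma rot_deriv: "((\<lambda>w::real\<times>real. fst w *\<^sub>R d + snd w *\<^sub>R e) has_derivative (\<lambda>w. fst w *\<^sub>R d + snd w *\<^sub>R (e::real\<times>real))) F"
  by (intro bounded_linear_imp_has_derivative bounded_linear_add
      bounded_linear_compose[OF bounded_linear_scaleR_left] bounded_linear_fst bounded_linear_snd)

lemma setup_rep:
  assumes r0: "r0 > 0" and hs: "\<forall>q\<in>ball 0 r0. ((\<lambda>(i,j). c0 i j * (fst q - fst (0::real\<times>real)) ^ i * (snd q - snd (0::real\<times>real)) ^ j) has_sum h q) UNIV"
  shows "rep h c0 (r0/2)"
  unfolding rep_def
proof
  have trm: "(\<lambda>(i,j). c0 i j * (fst q - fst (0::real\<times>real)) ^ i * (snd q - snd (0::real\<times>real)) ^ j) = trm c0 q" for q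
    by (simp add: trm_def)
  show "cv c0 (r0/2)" unfolding cv_def
  proof (intro allI impI)
    fix r assume r: "0 < r \<and> r < r0/2"
    have "norm (r,r) \<le> \<bar>r\<bar> + \<bar>r\<bar>" using norm_le_abs[of "(r,r)"] by simp
    then have "(r,r) \<in> ball 0 r0" using r by simp
    then have "trm c0 (r,r) summable_on UNIV" using hs trm by (metis has_sum_imp_summable)
    then have "(\<lambda>x. norm (trm c0 (r,r) x)) summable_on UNIV" using summable_on_iff_abs_summable_on_real by blast
    then show "(\<lambda>(i,j). \<bar>c0 i j\<bar> * r ^ (i+j)) summable_on UNIV"
      by (rule summable_on_cong[THEN iffD1, rotated]) (use r in \<open>auto simp: trm_def abs_mult power_abs power_add\<close>)
  qed
  show "\<forall>q\<in>sqbox (r0/2). h q = S c0 q"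
  proof
    fix q assume "q \<in> sqbox (r0/2)"
    then have "q \<in> ball 0 r0" using sqbox_ball[of "r0/2"] by auto
    then have "(trm c0 q has_sum h q) UNIV" using hs trm by metis
    then show "h q = S c0 q" unfolding S_def by (simp add: infsumI)
  qed
qed



lemma abs_prod_le:
  fixes x y n :: real assumes "\<bar>x\<bar> \<le> 1" "\<bar>y\<bar> \<le> n"
  shows "\<bar>x * y\<bar> \<le> n" "\<bar>y * x\<bar> \<le> n"
proof -
  have "\<bar>x\<bar> * \<bar>y\<bar> \<le> 1 * n" by (rule mult_mono) (use assms in auto)
  then show "\<bar>x * y\<bar> \<le> n" "\<bar>y * x\<bar> \<le> n" by (simp_all add: abs_mult mult.commute)
qed

theorem lemma4p4:
  fixes h :: "real \<times> real \<Rightarrow> real"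
    and R :: real
    and d :: "real \<times> real"
    and a b :: real
  defines "\<Omega> \<equiv> ball (0::real \<times> real) R"
    and "\<Gamma> \<equiv> (\<lambda>t. t *\<^sub>R d) ` {-a..b}"
  assumes "R > 0"
    and analytic: "real_analytic_on2 h \<Omega>"
    and not_affine: "\<not> affine_linear_on h \<Omega>"
    and hess_sign: "\<forall>p\<in>\<Omega>. px (px h) p * py (py h) p - (py (px h) p)\<^sup>2 \<le> 0"
    and "h 0 = 0"
    and "grad h 0 = 0"
    and "norm d = 1" and "a > 0" and "b > 0"
    and "\<Gamma> \<subseteq> \<Omega>"
    and "\<forall>p\<in>\<Gamma>. hessian_zero_at h p"
  shows "\<forall>\<nu>::real \<times> real. norm \<nu> = 1 \<and> \<nu> \<notin> span {d} \<longrightarrow>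
     \<not> (\<forall>q\<in>\<Omega>. grad (dirderiv h \<nu>) q = 0) \<and>
     (\<exists>r>0. r \<le> R \<and>
       (\<exists>L :: real \<times> real \<Rightarrow> (real \<times> real) set.
          (\<forall>q\<in>ball 0 r. grad (dirderiv h \<nu>) q \<noteq> 0 \<longrightarrow>
                L q = span {grad (dirderiv h \<nu>) q}) \<and>
          (\<forall>p\<in>\<Gamma> \<inter> ball 0 r. p \<noteq> 0 \<longrightarrow>
             (\<exists>U W. open U \<and> p \<in> U \<and> U \<subseteq> ball 0 r \<and>
                real_analytic_vf_on W U \<and> (\<forall>q\<in>U. W q \<noteq> 0) \<and>
                (\<forall>q\<in>U. grad (dirderiv h \<nu>) q \<noteq> 0 \<or> q \<in> \<Gamma> - {0} \<longrightarrow>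
                       L q = span {W q}) \<and>
                inner (W p) d = 0))))"
proof (intro allI impI)
  fix \<nu> :: "real \<times> real"
  assume \<nu>: "norm \<nu> = 1 \<and> \<nu> \<notin> span {d}"
  have "0 \<in> \<Omega>" using \<open>R > 0\<close> by (simp add: \<Omega>_def)
  then obtain r0 c0 where r0: "r0 > 0" "ball 0 r0 \<subseteq> \<Omega>"
    "\<forall>q\<in>ball 0 r0. ((\<lambda>(i,j). c0 i j * (fst q - fst (0::real\<times>real)) ^ i * (snd q - snd (0::real\<times>real)) ^ j) has_sum h q) UNIV"
    using analytic unfolding real_analytic_on2_def by blast
  define \<rho>0 where "\<rho>0 = r0/2"
  have \<rho>0: "0 < \<rho>0" "\<rho>0 < r0" using r0 by (auto simp: \<rho>0_def)
  have hrep: "rep h c0 \<rho>0" unfolding \<rho>0_def by (rule setup_rep[OF r0(1,3)])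
  have cv0: "cv c0 \<rho>0" using hrep by (simp add: rep_def)
  have rx: "rep (px h) (Dx c0) \<rho>0" by (rule rep_Dx[OF hrep])
  have ry: "rep (py h) (Dy c0) \<rho>0" by (rule rep_Dy[OF hrep])
  have ballB: "\<And>q. norm q < \<rho>0 \<Longrightarrow> q \<in> sqbox \<rho>0" using ball_sqbox[of \<rho>0] by auto
  have ballO: "\<And>q. norm q < \<rho>0 \<Longrightarrow> q \<in> \<Omega>" using r0(2) \<rho>0 by auto
  define e where "e = (- snd d, fst d)"
  have dsq: "fst d ^ 2 + snd d ^ 2 = 1" using unit_facts[OF \<open>norm d = 1\<close>] by simp
  have ne: "norm e = 1" using dsq by (simp add: e_def norm_Pair add.commute)
  have de: "inner d e = 0" "inner e d = 0" by (simp_all add: e_def inner_prod_def algebra_simps)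
  have dd: "inner d d = 1" using dsq by (simp add: inner_prod_def power2_eq_square)
  have decomp': "\<And>v. v = inner v d *\<^sub>R d + inner v e *\<^sub>R e" unfolding e_def by (rule decomp[OF dsq])
  have hz: "\<And>p. p \<in> \<Gamma> \<Longrightarrow> px (px h) p = 0 \<and> py (px h) p = 0 \<and> px (py h) p = 0 \<and> py (py h) p = 0"
    using \<open>\<forall>p\<in>\<Gamma>. hessian_zero_at h p\<close> by (auto simp: hessian_zero_at_def)
  have g0: "px h 0 = 0" "py h 0 = 0" using \<open>grad h 0 = 0\<close> by (simp_all add: grad_def zero_prod_def)
  define \<delta>1 where "\<delta>1 = min \<rho>0 (min a b)"
  have \<delta>1: "0 < \<delta>1" using \<rho>0 \<open>a > 0\<close> \<open>b > 0\<close> by (simp add: \<delta>1_def)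
  have inG: "t *\<^sub>R d \<in> \<Gamma>" if "\<bar>t\<bar> < \<delta>1" for t
    unfolding \<Gamma>_def by (rule image_eqI[where x=t]) (use that in \<open>auto simp: \<delta>1_def abs_less_iff\<close>)
  have inB: "\<And>t. \<bar>t\<bar> < \<delta>1 \<Longrightarrow> t *\<^sub>R d \<in> sqbox \<rho>0"
    using \<open>norm d = 1\<close> by (intro ballB) (auto simp: \<delta>1_def)
  have K1: "grad h (s *\<^sub>R d) = 0" if s: "\<bar>s\<bar> < \<delta>1" for s
  proof -
    have sI: "s \<in> {-\<delta>1<..<\<delta>1}" using s by auto
    have "px h (0 + s *\<^sub>R d) = px h 0"
    proof (rule seg_const[where G="\<lambda>t. grad (px h) (t *\<^sub>R d)"])
      fix t assume "t \<in> {-\<delta>1<..<\<delta>1}"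
      then have t: "\<bar>t\<bar> < \<delta>1" by auto
      show "(px h has_derivative (\<lambda>v. inner (grad (px h) (t *\<^sub>R d)) v)) (at (0 + t *\<^sub>R d))"
        using rep_grad[OF rx inB[OF t]] by simp
      show "inner (grad (px h) (t *\<^sub>R d)) d = 0" using hz[OF inG[OF t]] by (simp add: grad_def inner_prod_def)
    qed (use sI \<delta>1 in auto)
    moreover have "py h (0 + s *\<^sub>R d) = py h 0"
    proof (rule seg_const[where G="\<lambda>t. grad (py h) (t *\<^sub>R d)"])
      fix t assume "t \<in> {-\<delta>1<..<\<delta>1}"
      then have t: "\<bar>t\<bar> < \<delta>1" by auto
      show "(py h has_derivative (\<lambda>v. inner (grad (py h) (t *\<^sub>R d)) v)) (at (0 + t *\<^sub>R d))"
        using rep_grad[OF ry inB[OF t]] by simp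
      show "inner (grad (py h) (t *\<^sub>R d)) d = 0" using hz[OF inG[OF t]] by (simp add: grad_def inner_prod_def)
    qed (use sI \<delta>1 in auto)
    ultimately have "px h (s *\<^sub>R d) = 0" "py h (s *\<^sub>R d) = 0" using g0 by simp_all
    then show ?thesis by (simp add: grad_def zero_prod_def)
  qed
  have nu1: "\<bar>fst \<nu>\<bar> \<le> 1" "\<bar>snd \<nu>\<bar> \<le> 1" using unit_facts[of \<nu>] \<nu> by auto
  define D where "D = fst d * snd \<nu> - snd d * fst \<nu>"
  have D: "D \<noteq> 0"
  proof
    assume D0: "D = 0"
    have "inner \<nu> e = D" by (simp add: e_def D_def inner_prod_def algebra_simps)
    then have "\<nu> = inner \<nu> d *\<^sub>R d" using decomp'[of \<nu>] D0 by simp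
    then have "\<nu> \<in> span {d}" unfolding span_singleton by (metis rangeI)
    then show False using \<nu> by simp
  qed
  define \<phi> where "\<phi> = dirderiv h \<nu>"
  define c where "c = (\<lambda>i j. fst \<nu> * Dx c0 i j + snd \<nu> * Dy c0 i j)"
  have cvc: "cv c \<rho>0" unfolding c_def by (rule cv_lin[OF cv_Dx[OF cv0] cv_Dy[OF cv0]])
  have phirep: "rep \<phi> c \<rho>0" unfolding rep_def
  proof (intro conjI cvc ballI)
    fix q assume q: "q \<in> sqbox \<rho>0"
    have "\<phi> q = fst \<nu> * px h q + snd \<nu> * py h q" by (simp add: \<phi>_def dirderiv_def grad_def inner_prod_def mult.commute)
    also have "\<dots> = fst \<nu> * S (Dx c0) q + snd \<nu> * S (Dy c0) q" using rep_px[OF hrep q] rep_py[OF hrep q] by simp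
    also have "\<dots> = S c q" unfolding c_def by (rule S_lin[OF cv_Dx[OF cv0] cv_Dy[OF cv0] q, symmetric])
    finally show "\<phi> q = S c q" .
  qed
  have \<phi>\<Gamma>: "\<phi> (s *\<^sub>R d) = 0" if "\<bar>s\<bar> < \<delta>1" for s
    using K1[OF that] by (simp add: \<phi>_def dirderiv_def)
  have \<phi>0: "\<phi> 0 = 0" using \<open>grad h 0 = 0\<close> by (simp add: \<phi>_def dirderiv_def)
  have NZ: "\<not> (\<exists>\<epsilon>>0. \<forall>q\<in>ball 0 \<epsilon>. \<phi> q = 0)"
  proof
    assume "\<exists>\<epsilon>>0. \<forall>q\<in>ball 0 \<epsilon>. \<phi> q = 0"
    then obtain \<epsilon> where \<epsilon>: "\<epsilon> > 0" "\<And>q. norm q < \<epsilon> \<Longrightarrow> \<phi> q = 0" by auto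
    define \<epsilon>1 where "\<epsilon>1 = min \<epsilon> \<delta>1"
    have \<epsilon>1: "0 < \<epsilon>1" "\<epsilon>1 \<le> \<epsilon>" "\<epsilon>1 \<le> \<delta>1" "\<epsilon>1 \<le> \<rho>0" using \<epsilon> \<delta>1 by (auto simp: \<epsilon>1_def \<delta>1_def)
    define C where "C = 2 / \<bar>D\<bar>"
    have C: "C > 0" using D by (simp add: C_def)
    define \<epsilon>2 where "\<epsilon>2 = \<epsilon>1 / (2*C+1)"
    have \<epsilon>2: "\<epsilon>2 > 0" "2 * C * \<epsilon>2 < \<epsilon>1" using \<epsilon>1 C by (auto simp: \<epsilon>2_def field_simps)
    have hz2: "h q = 0" if q: "norm q < \<epsilon>2" for q
    proof -
      define s where "s = (fst q * snd \<nu> - snd q * fst \<nu>) / D"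
      define \<tau> where "\<tau> = (fst d * snd q - snd d * fst q) / D"
      have qe: "q = s *\<^sub>R d + \<tau> *\<^sub>R \<nu>"
      proof -
        have "s * fst d + \<tau> * fst \<nu> = fst q * (fst d * snd \<nu> - snd d * fst \<nu>) / D"
          by (simp add: s_def \<tau>_def field_simps D, (simp add: algebra_simps)?)
        moreover have "s * snd d + \<tau> * snd \<nu> = snd q * (fst d * snd \<nu> - snd d * fst \<nu>) / D"
          by (simp add: s_def \<tau>_def field_simps D, (simp add: algebra_simps)?)
        ultimately show ?thesis using D by (simp add: prod_eq_iff D_def[symmetric])
      qed
      have q12: "\<bar>fst q\<bar> \<le> norm q" "\<bar>snd q\<bar> \<le> norm q"
        using norm_fst_le[of "fst q" "snd q"] norm_snd_le[of "snd q" "fst q"] by auto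
      have d12: "\<bar>fst d\<bar> \<le> 1" "\<bar>snd d\<bar> \<le> 1" using unit_facts[OF \<open>norm d = 1\<close>] by auto
      have b1: "\<bar>fst q * snd \<nu> - snd q * fst \<nu>\<bar> \<le> 2 * norm q"
      proof -
        have "\<bar>fst q * snd \<nu>\<bar> \<le> norm q" using abs_prod_le(2)[OF nu1(2) q12(1)] .
        moreover have "\<bar>snd q * fst \<nu>\<bar> \<le> norm q" using abs_prod_le(2)[OF nu1(1) q12(2)] .
        ultimately show ?thesis by linarith
      qed
      have b2: "\<bar>fst d * snd q - snd d * fst q\<bar> \<le> 2 * norm q"
      proof -
        have "\<bar>fst d * snd q\<bar> \<le> norm q" using abs_prod_le(1)[OF d12(1) q12(2)] .
        moreover have "\<bar>snd d * fst q\<bar> \<le> norm q" using abs_prod_le(1)[OF d12(2) q12(1)] .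
        ultimately show ?thesis by linarith
      qed
      have sb: "\<bar>s\<bar> \<le> C * norm q" using b1 D by (simp add: s_def C_def abs_divide field_simps)
      have tb: "\<bar>\<tau>\<bar> \<le> C * norm q" using b2 D by (simp add: \<tau>_def C_def abs_divide field_simps)
      have sum: "\<bar>s\<bar> + \<bar>\<tau>\<bar> < \<epsilon>1"
      proof -
        have "\<bar>s\<bar> + \<bar>\<tau>\<bar> \<le> 2 * C * norm q" using sb tb by simp
        also have "\<dots> \<le> 2 * C * \<epsilon>2" using q C by simp
        finally show ?thesis using \<epsilon>2 by simp
      qed
      have "h (0 + s *\<^sub>R d) = h 0"
      proof (rule seg_const[where G="\<lambda>t. grad h (t *\<^sub>R d)" and I="{-\<delta>1<..<\<delta>1}"])
        fix t assume "t \<in> {-\<delta>1<..<\<delta>1}"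
        then have t: "\<bar>t\<bar> < \<delta>1" by auto
        show "(h has_derivative (\<lambda>v. inner (grad h (t *\<^sub>R d)) v)) (at (0 + t *\<^sub>R d))"
          using rep_grad[OF hrep inB[OF t]] by simp
        show "inner (grad h (t *\<^sub>R d)) d = 0" using K1[OF t] by simp
      qed (use sum \<epsilon>1 \<delta>1 in auto)
      then have hs: "h (s *\<^sub>R d) = 0" using \<open>h 0 = 0\<close> by simp
      define I where "I = {min 0 \<tau> .. max 0 \<tau>}"
      have "h (s *\<^sub>R d + \<tau> *\<^sub>R \<nu>) = h (s *\<^sub>R d)"
      proof (rule seg_const[where G="\<lambda>t. grad h (s *\<^sub>R d + t *\<^sub>R \<nu>)" and I=I])
        show "convex I" by (simp add: I_def)
        show "0 \<in> I" "\<tau> \<in> I" by (auto simp: I_def)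
        fix t assume "t \<in> I"
        then have t: "\<bar>t\<bar> \<le> \<bar>\<tau>\<bar>" by (auto simp: I_def)
        have "norm (s *\<^sub>R d + t *\<^sub>R \<nu>) \<le> \<bar>s\<bar> + \<bar>t\<bar>"
          using norm_triangle_ineq[of "s *\<^sub>R d" "t *\<^sub>R \<nu>"] \<open>norm d = 1\<close> \<nu> by simp
        then have nt: "norm (s *\<^sub>R d + t *\<^sub>R \<nu>) < \<epsilon>1" using sum t by simp
        show "(h has_derivative (\<lambda>v. inner (grad h (s *\<^sub>R d + t *\<^sub>R \<nu>)) v)) (at (s *\<^sub>R d + t *\<^sub>R \<nu>))"
          by (rule rep_grad[OF hrep ballB]) (use nt \<epsilon>1 in simp)
        have "\<phi> (s *\<^sub>R d + t *\<^sub>R \<nu>) = 0" using nt \<epsilon>1 by (intro \<epsilon>(2)) simp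
        then show "inner (grad h (s *\<^sub>R d + t *\<^sub>R \<nu>)) \<nu> = 0" by (simp add: \<phi>_def dirderiv_def)
      qed
      then show ?thesis using hs qe by simp
    qed
    have "\<forall>q\<in>\<Omega>. h q = 0"
    proof
      fix q assume "q \<in> \<Omega>"
      then show "h q = 0"
        using identity2[of h R \<epsilon>2 q] analytic \<epsilon>2 hz2 by (auto simp: \<Omega>_def)
    qed
    then have "affine_linear_on h \<Omega>" unfolding affine_linear_on_def by (intro exI[of _ 0]) simp
    then show False using not_affine by simp
  qed
  have part1: "\<not> (\<forall>q\<in>\<Omega>. grad \<phi> q = 0)"
  proof
    assume G0: "\<forall>q\<in>\<Omega>. grad \<phi> q = 0"
    have "\<exists>k. \<forall>q\<in>ball 0 \<rho>0. \<phi> q = k"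
    proof (rule has_derivative_zero_constant)
      fix q assume "q \<in> ball (0::real\<times>real) \<rho>0"
      then have q: "norm q < \<rho>0" by simp
      have "(\<phi> has_derivative (\<lambda>v. inner (grad \<phi> q) v)) (at q)" by (rule rep_grad[OF phirep ballB[OF q]])
      then show "(\<phi> has_derivative (\<lambda>h. 0)) (at q within ball 0 \<rho>0)"
        using G0 ballO[OF q] by (simp add: has_derivative_at_withinI)
    qed simp
    then obtain k where k: "\<And>q. norm q < \<rho>0 \<Longrightarrow> \<phi> q = k" by auto
    have "k = 0" using k[of 0] \<phi>0 \<rho>0 by simp
    then show False using NZ k \<rho>0 by auto
  qed
  define \<sigma>1 where "\<sigma>1 = \<rho>0/2"
  have \<sigma>1: "0 < \<sigma>1" "\<sigma>1 < \<rho>0" using \<rho>0 by (auto simp: \<sigma>1_def)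
  have d12: "\<bar>fst d\<bar> \<le> 1" "\<bar>snd d\<bar> \<le> 1" using unit_facts[OF \<open>norm d = 1\<close>] by auto
  obtain ch where ch: "cv ch \<sigma>1"
    "\<forall>st\<in>sqbox \<sigma>1. S c (fst d * fst st + (- snd d) * snd st, snd d * fst st + fst d * snd st) = S ch st"
    using lin_lemma[OF cvc, of 2 "fst d" "- snd d" "snd d" "fst d"] d12 unfolding \<sigma>1_def by auto
  define rot where "rot = (\<lambda>st::real\<times>real. fst st *\<^sub>R d + snd st *\<^sub>R e)"
  have rot_pair: "rot st = (fst d * fst st + (- snd d) * snd st, snd d * fst st + fst d * snd st)" for st
    by (simp add: rot_def e_def prod_eq_iff algebra_simps)
  have rotbox: "rot st \<in> sqbox \<rho>0" if st: "st \<in> sqbox \<sigma>1" for st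
  proof -
    have "norm (rot st) \<le> norm (fst st *\<^sub>R d) + norm (snd st *\<^sub>R e)"
      unfolding rot_def by (rule norm_triangle_ineq)
    also have "\<dots> = \<bar>fst st\<bar> + \<bar>snd st\<bar>" using \<open>norm d = 1\<close> ne by simp
    also have "\<dots> < \<rho>0" using st by (simp add: sqbox_def \<sigma>1_def)
    finally show ?thesis by (rule ballB)
  qed
  have psi: "\<phi> (rot st) = S ch st" if st: "st \<in> sqbox \<sigma>1" for st
  proof -
    have "\<phi> (rot st) = S c (rot st)" using phirep rotbox[OF st] by (simp add: rep_def)
    also have "\<dots> = S ch st" using ch(2) st by (simp add: rot_pair)
    finally show ?thesis .
  qed
  define ell where "ell = (\<lambda>q::real\<times>real. (inner q d, inner q e))"
  have rot_ell: "rot (ell q) = q" for q using decomp'[of q] by (simp add: rot_def ell_def)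
  have ell_box: "ell q \<in> sqbox \<sigma>1" if "norm q < \<sigma>1" for q
    using inner_le_norm[OF \<open>norm d = 1\<close>, of q] inner_le_norm[OF ne, of q] that
    by (auto simp: ell_def sqbox_def)
  have chne: "\<exists>j i. ch i j \<noteq> 0"
  proof (rule ccontr)
    assume "\<not> (\<exists>j i. ch i j \<noteq> 0)"
    then have ch0: "ch = (\<lambda>i j. 0)" by (auto simp: fun_eq_iff)
    have "\<forall>q\<in>ball 0 \<sigma>1. \<phi> q = 0"
    proof
      fix q assume "q \<in> ball (0::real\<times>real) \<sigma>1"
      then have q: "norm q < \<sigma>1" by simp
      have "\<phi> q = \<phi> (rot (ell q))" by (simp add: rot_ell)
      also have "\<dots> = S ch (ell q)" by (rule psi[OF ell_box[OF q]])
      finally show "\<phi> q = 0" by (simp add: ch0 S_zero_coeffs)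
    qed
    then show False using NZ \<sigma>1 by blast
  qed
  define m where "m = (LEAST j. \<exists>i. ch i j \<noteq> 0)"
  obtain i0 where i0: "ch i0 m \<noteq> 0" using LeastI_ex[of "\<lambda>j. \<exists>i. ch i j \<noteq> 0"] chne by (auto simp: m_def)
  have below: "ch i j = 0" if "j < m" for i j
    using not_less_Least[OF that[unfolded m_def]] by auto
  have "ch i0 0 = 0"
  proof (rule Z1_zero[OF ch(1) \<sigma>1(1), of "min \<sigma>1 \<delta>1"])
    show "0 < min \<sigma>1 \<delta>1" using \<sigma>1 \<delta>1 by simp
    fix s :: real assume s: "\<bar>s\<bar> < min \<sigma>1 \<delta>1"
    have "(s, 0) \<in> sqbox \<sigma>1" using s \<sigma>1 by (simp add: sqbox_def)
    then have "S ch (s,0) = \<phi> (rot (s,0))" by (simp add: psi)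
    also have "rot (s,0) = s *\<^sub>R d" by (simp add: rot_def)
    also have "\<phi> (s *\<^sub>R d) = 0" using s by (intro \<phi>\<Gamma>) simp
    finally show "S ch (s,0) = 0" .
  qed
  then have m0: "m \<noteq> 0" using i0 by (intro notI) simp
  define pp where "pp = (\<lambda>i j. Dx ch i (j + (m-1)))"
  define qq where "qq = (\<lambda>i j. Dy ch i (j + (m-1)))"
  have cvp: "cv pp \<sigma>1" unfolding pp_def by (rule cv_divt[OF cv_Dx[OF ch(1)]])
  have cvq: "cv qq \<sigma>1" unfolding qq_def by (rule cv_divt[OF cv_Dy[OF ch(1)]])
  have zx: "Dx ch i j = 0" if "j < m - 1" for i j using that below by (simp add: Dx_def)
  have zy: "Dy ch i j = 0" if "j < m - 1" for i j using that below by (simp add: Dy_def)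
  have divx: "S (Dx ch) st = snd st ^ (m-1) * S pp st" if "st \<in> sqbox \<sigma>1" for st
    unfolding pp_def by (rule divt_lemma[OF cv_Dx[OF ch(1)] zx that])
  have divy: "S (Dy ch) st = snd st ^ (m-1) * S qq st" if "st \<in> sqbox \<sigma>1" for st
    unfolding qq_def by (rule divt_lemma[OF cv_Dy[OF ch(1)] zy that])
  have psirep: "rep (\<lambda>st. \<phi> (rot st)) ch \<sigma>1" using ch(1) psi by (simp add: rep_def)
  have Gform: "grad \<phi> q = S (Dx ch) (ell q) *\<^sub>R d + S (Dy ch) (ell q) *\<^sub>R e" if q: "norm q < \<sigma>1" for q
  proof -
    define st where "st = ell q"
    have st: "st \<in> sqbox \<sigma>1" unfolding st_def by (rule ell_box[OF q])
    have rq: "rot st = q" by (simp add: st_def rot_ell)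
    have h\<phi>: "(\<phi> has_derivative (\<lambda>v. inner (grad \<phi> q) v)) (at (rot st))"
      unfolding rq by (rule rep_grad[OF phirep ballB]) (use q \<sigma>1 in simp)
    have hrot: "(rot has_derivative rot) (at st)" unfolding rot_def by (rule rot_deriv)
    have "((\<lambda>x. \<phi> (rot x)) has_derivative (\<lambda>x. inner (grad \<phi> q) (rot x))) (at st)"
      by (rule has_derivative_compose[OF hrot h\<phi>])
    moreover have "(\<lambda>x. inner (grad \<phi> q) (rot x)) = (\<lambda>v. inner (grad \<phi> q) d * fst v + inner (grad \<phi> q) e * snd v)"
      by (simp add: rot_def inner_add_right fun_eq_iff mult.commute)
    ultimately have hd: "((\<lambda>x. \<phi> (rot x)) has_derivative (\<lambda>v. inner (grad \<phi> q) d * fst v + inner (grad \<phi> q) e * snd v)) (at st)"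
      by simp
    have 1: "inner (grad \<phi> q) d = S (Dx ch) st"
      using deriv_px_py(1)[OF hd] rep_px[OF psirep st] by simp
    have 2: "inner (grad \<phi> q) e = S (Dy ch) st"
      using deriv_px_py(2)[OF hd] rep_py[OF psirep st] by simp
    show ?thesis using decomp'[of "grad \<phi> q"] 1 2 by (simp add: st_def)
  qed
  define Wf where "Wf = (\<lambda>q. S pp (ell q) *\<^sub>R d + S qq (ell q) *\<^sub>R e)"
  have GW: "grad \<phi> q = (inner q e ^ (m-1)) *\<^sub>R Wf q" if q: "norm q < \<sigma>1" for q
    using Gform[OF q] divx[OF ell_box[OF q]] divy[OF ell_box[OF q]]
    by (simp add: Wf_def ell_def scaleR_add_right)
  have qq0: "qq i0 0 \<noteq> 0" using i0 m0 by (simp add: qq_def Dy_def)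
  obtain \<epsilon>1 where \<epsilon>1: "\<epsilon>1 > 0" "\<And>s. 0 < \<bar>s\<bar> \<and> \<bar>s\<bar> < \<epsilon>1 \<Longrightarrow> S qq (s,0) \<noteq> 0"
    using Z1[OF cvq \<sigma>1(1) qq0] by blast
  have Sp0: "S pp (s,0) = 0" for s
  proof -
    have "row0 pp = (\<lambda>i j. 0)" using below m0 by (auto simp: row0_def pp_def Dx_def fun_eq_iff)
    then show ?thesis using S_row0[of pp s] by (simp add: S_zero_coeffs)
  qed
  have Wline: "Wf (s *\<^sub>R d) = S qq (s,0) *\<^sub>R e" for s
    using Sp0[of s] dd de by (simp add: Wf_def ell_def)
  define r where "r = min (min \<sigma>1 \<epsilon>1) R"
  have r: "0 < r" "r \<le> R" "r \<le> \<sigma>1" "r \<le> \<epsilon>1" using \<sigma>1 \<epsilon>1 \<open>R > 0\<close> by (auto simp: r_def)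
  define L where "L = (\<lambda>q. if grad \<phi> q \<noteq> 0 then span {grad \<phi> q} else span {e})"
  have enz: "e \<noteq> 0" using ne by auto
  have part2: "(\<exists>r>0. r \<le> R \<and>
       (\<exists>L :: real \<times> real \<Rightarrow> (real \<times> real) set.
          (\<forall>q\<in>ball 0 r. grad (\<phi>) q \<noteq> 0 \<longrightarrow>
                L q = span {grad (\<phi>) q}) \<and>
          (\<forall>p\<in>\<Gamma> \<inter> ball 0 r. p \<noteq> 0 \<longrightarrow>
             (\<exists>U W. open U \<and> p \<in> U \<and> U \<subseteq> ball 0 r \<and>
                real_analytic_vf_on W U \<and> (\<forall>q\<in>U. W q \<noteq> 0) \<and>
                (\<forall>q\<in>U. grad (\<phi>) q \<noteq> 0 \<or> q \<in> \<Gamma> - {0} \<longrightarrow>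
                       L q = span {W q}) \<and>
                inner (W p) d = 0))))"

  proof (intro exI[of _ r] conjI exI[of _ L] ballI impI)
    show "0 < r" "r \<le> R" using r by auto
    fix q assume "grad \<phi> q \<noteq> 0"
    then show "L q = span {grad \<phi> q}" by (simp add: L_def)
  next
    fix p assume p: "p \<in> \<Gamma> \<inter> ball 0 r" "p \<noteq> 0"
    then obtain \<tau> where \<tau>: "p = \<tau> *\<^sub>R d" by (auto simp: \<Gamma>_def)
    have n\<tau>: "\<bar>\<tau>\<bar> < r" using p \<tau> \<open>norm d = 1\<close> by simp
    have \<tau>0: "\<tau> \<noteq> 0" using p \<tau> by auto
    have Wp: "Wf p = S qq (\<tau>,0) *\<^sub>R e" by (simp add: \<tau> Wline)
    have Sq: "S qq (\<tau>,0) \<noteq> 0" using \<epsilon>1(2)[of \<tau>] n\<tau> \<tau>0 r by auto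
    have Wp_ne: "Wf p \<noteq> 0" using Wp Sq enz by simp
    have ell_cont: "isCont ell p" unfolding ell_def by (intro continuous_intros)
    have ellp: "ell p \<in> sqbox \<sigma>1" using n\<tau> r by (simp add: \<tau> ell_def dd de sqbox_def)
    have c1: "isCont (\<lambda>q. S pp (ell q)) p"
      using continuous_at_compose[OF ell_cont rep_cont[OF rep_S[OF cvp] ellp]] by (simp add: o_def)
    have c2: "isCont (\<lambda>q. S qq (ell q)) p"
      using continuous_at_compose[OF ell_cont rep_cont[OF rep_S[OF cvq] ellp]] by (simp add: o_def)
    have cont: "isCont Wf p" unfolding Wf_def by (intro continuous_intros c1 c2)
    obtain \<epsilon>2 where \<epsilon>2: "\<epsilon>2 > 0" "\<And>y. dist p y < \<epsilon>2 \<Longrightarrow> Wf y \<noteq> 0"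
      using continuous_at_avoid[OF cont Wp_ne] by blast
    have np: "norm p < r" using p by simp
    define U where "U = ball p (min \<epsilon>2 (r - norm p))"
    have UB: "U \<subseteq> ball 0 r"
    proof
      fix y assume "y \<in> U"
      then have "norm (p - y) < r - norm p" by (simp add: U_def dist_norm)
      moreover have "norm y \<le> norm p + norm (p - y)" using norm_triangle_ineq4[of p "p - y"] by simp
      ultimately show "y \<in> ball 0 r" by simp
    qed
    have UB1: "U \<subseteq> ball 0 \<sigma>1" using UB r by auto
    show "\<exists>U W. open U \<and> p \<in> U \<and> U \<subseteq> ball 0 r \<and>
                real_analytic_vf_on W U \<and> (\<forall>q\<in>U. W q \<noteq> 0) \<and>
                (\<forall>q\<in>U. grad \<phi> q \<noteq> 0 \<or> q \<in> \<Gamma> - {0} \<longrightarrow>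
                       L q = span {W q}) \<and>
                inner (W p) d = 0"
    proof (intro exI[of _ U] exI[of _ Wf] conjI ballI impI)
      show "open U" by (simp add: U_def)
      show "p \<in> U" using \<epsilon>2 np by (simp add: U_def)
      show "U \<subseteq> ball 0 r" by (rule UB)
      have f1: "(\<lambda>q. fst (Wf q)) = (\<lambda>q. fst d * S pp (inner q d, inner q e) + fst e * S qq (inner q d, inner q e))"
        by (simp add: Wf_def ell_def fun_eq_iff mult.commute)
      have f2: "(\<lambda>q. snd (Wf q)) = (\<lambda>q. snd d * S pp (inner q d, inner q e) + snd e * S qq (inner q d, inner q e))"
        by (simp add: Wf_def ell_def fun_eq_iff mult.commute)
      show "real_analytic_vf_on Wf U" unfolding real_analytic_vf_on_def f1 f2
        by (intro conjI ANA[OF cvp cvq _ UB1 \<open>norm d = 1\<close> ne]) (simp_all add: U_def)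
      fix q assume q: "q \<in> U"
      show "Wf q \<noteq> 0" using q \<epsilon>2(2) by (auto simp: U_def)
      have nq: "norm q < r" using q UB by auto
      assume disj: "grad \<phi> q \<noteq> 0 \<or> q \<in> \<Gamma> - {0}"
      show "L q = span {Wf q}"
      proof (cases "grad \<phi> q = 0")
        case False
        have "grad \<phi> q = (inner q e ^ (m-1)) *\<^sub>R Wf q" using GW nq r by simp
        moreover have "inner q e ^ (m-1) \<noteq> 0" using False calculation by auto
        ultimately show ?thesis using False span_sc by (simp add: L_def)
      next
        case True
        then have qG: "q \<in> \<Gamma> - {0}" using disj by simp
        then obtain \<tau>' where \<tau>': "q = \<tau>' *\<^sub>R d" by (auto simp: \<Gamma>_def)
        have "\<tau>' \<noteq> 0" using qG \<tau>' by auto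
        moreover have "\<bar>\<tau>'\<bar> < r" using nq \<tau>' \<open>norm d = 1\<close> by simp
        ultimately have "S qq (\<tau>',0) \<noteq> 0" using \<epsilon>1(2)[of \<tau>'] r by auto
        then have "span {Wf q} = span {e}" using span_sc by (simp add: \<tau>' Wline)
        then show ?thesis using True by (simp add: L_def)
      qed
    next
      show "inner (Wf p) d = 0" using de by (simp add: Wp)
    qed
  qed
  show "\<not> (\<forall>q\<in>\<Omega>. grad (dirderiv h \<nu>) q = 0) \<and>
     (\<exists>r>0. r \<le> R \<and>
       (\<exists>L :: real \<times> real \<Rightarrow> (real \<times> real) set.
          (\<forall>q\<in>ball 0 r. grad (dirderiv h \<nu>) q \<noteq> 0 \<longrightarrow>
                L q = span {grad (dirderiv h \<nu>) q}) \<and>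
          (\<forall>p\<in>\<Gamma> \<inter> ball 0 r. p \<noteq> 0 \<longrightarrow>
             (\<exists>U W. open U \<and> p \<in> U \<and> U \<subseteq> ball 0 r \<and>
                real_analytic_vf_on W U \<and> (\<forall>q\<in>U. W q \<noteq> 0) \<and>
                (\<forall>q\<in>U. grad (dirderiv h \<nu>) q \<noteq> 0 \<or> q \<in> \<Gamma> - {0} \<longrightarrow>
                       L q = span {W q}) \<and>
                inner (W p) d = 0))))"
    using conjI[OF part1 part2] unfolding \<phi>_def .
qed


end
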